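(* Let $a<0$, $\sigma>0$, $T>0$, and let $x(t)$ be the solution of $\mathrm{d}x(t)=a\,x(t)\,\mathrm{d}t+\sigma\,\mathrm{d}w(t)$, $x(0)=0$, where $w$ is a standard Wiener process. Let $h>0$ be such that $N=T/h$ is a positive integer, let $M\ge 1$ be an integer and put $B=MN$. Let $x_1,\dots,x_M$ be independent copies of $x$, and define $$\hat V_M(h)=\frac1M\sum_{i=1}^M\sum_{k=0}^{N-1} h\,x_i^2(kh),\qquad V_T=\int_0^T\mathbb{E}[x^2(t)]\,\mathrm{d}t,\qquad \mathrm{MSE}_T(h,B)=\mathbb{E}\big[(\hat V_M(h)-V_T)^2\big].$$ Then $\mathrm{MSE}_T(h,B)=E_1(h,T,a)+\frac{E_2(h,T,a)}{B}$, where $$E_1(h,T,a)=\frac{\sigma^4\left(-2ah+e^{2ah}-1\right)^2\left(e^{2aT}-1\right)^2}{16a^4\left(e^{2ah}-1\right)^2},$$ $$E_2(h,T,a)=\frac{\sigma^4T\left[h\left(e^{2aT}-1\right)\left(4e^{2ah}+e^{2aT}+1\right)-\left(e^{2ah}-1\right)\left(e^{2ah}+4e^{2aT}+1\right)T\right]}{2a^2\left(e^{2ah}-1\right)^2}.$$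
   Context: This is the finite-horizon, undiscounted Monte-Carlo policy evaluation of a one-dimensional Langevin (linear quadratic) system with quadratic cost $x^2$ (cost weight $q=1$): the system horizon equals the estimation horizon $T$, the data budget is $B=M\cdot N$ (number of episodes times number of samples per episode), and $\hat V_M(h)$ is the average over $M$ episodes of the left Riemann sum of the cost with step-size $h$. *)

theory Defs
  imports "HOL-Probability.Probability"
begin

definition wiener_process :: "'a measure \<Rightarrow> (real \<Rightarrow> 'a \<Rightarrow> real) \<Rightarrow> bool" where
  "wiener_process P W \<longleftrightarrow>
     prob_space P \<and>
     (\<forall>t. W t \<in> borel_measurable P) \<and>
     (\<forall>\<omega>\<in>space P. W 0 \<omega> = 0 \<and> continuous_on {0..} (\<lambda>t. W t \<omega>)) \<and>
     (\<forall>s t. 0 \<le> s \<longrightarrow> s < t \<longrightarrow>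
        distributed P lborel (\<lambda>\<omega>. W t \<omega> - W s \<omega>)
          (\<lambda>y. ennreal (normal_density 0 (sqrt (t - s)) y))) \<and>
     (\<forall>(n::nat) (ts::nat \<Rightarrow> real). 0 \<le> ts 0 \<longrightarrow> (\<forall>i<n. ts i < ts (Suc i)) \<longrightarrow>
        prob_space.indep_vars P (\<lambda>_. borel) (\<lambda>i \<omega>. W (ts (Suc i)) \<omega> - W (ts i) \<omega>) {..<n})"

text \<open>X solves dX(t) = a X(t) dt + \<sigma> dW(t), X(0) = 0, written in integral form
  X(t) = \<integral>_0^t a X(s) ds + \<sigma> W(t) (additive noise: the stochastic integral of the
  constant \<sigma> is \<sigma> W(t)); paths of X are continuous.\<close>
definition langevin_solution ::
  "'a measure \<Rightarrow> real \<Rightarrow> real \<Rightarrow> (real \<Rightarrow> 'a \<Rightarrow> real) \<Rightarrow> (real \<Rightarrow> 'a \<Rightarrow> real) \<Rightarrow> bool" where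
  "langevin_solution P a \<sigma> W X \<longleftrightarrow>
     (\<forall>t. X t \<in> borel_measurable P) \<and>
     (\<forall>\<omega>\<in>space P. continuous_on {0..} (\<lambda>t. X t \<omega>) \<and>
        (\<forall>t\<ge>0. X t \<omega> = integral {0..t} (\<lambda>s. a * X s \<omega>) + \<sigma> * W t \<omega>))"

definition E1 :: "real \<Rightarrow> real \<Rightarrow> real \<Rightarrow> real \<Rightarrow> real" where
  "E1 \<sigma> h T a =
     \<sigma>^4 * (-2*a*h + exp (2*a*h) - 1)^2 * (exp (2*a*T) - 1)^2
     / (16 * a^4 * (exp (2*a*h) - 1)^2)"

definition E2 :: "real \<Rightarrow> real \<Rightarrow> real \<Rightarrow> real \<Rightarrow> real" where
  "E2 \<sigma> h T a =
     \<sigma>^4 * T * (h * (exp (2*a*T) - 1) * (4 * exp (2*a*h) + exp (2*a*T) + 1)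
                 - (exp (2*a*h) - 1) * (exp (2*a*h) + 4 * exp (2*a*T) + 1) * T)
     / (2 * a^2 * (exp (2*a*h) - 1)^2)"

end

theory Submission
  imports Defs "HOL-Probability.Probability"
begin

lemma step_bound:
  fixes w x :: "real \<Rightarrow> real" and a \<sigma> \<tau> \<delta> \<epsilon> :: real
  assumes a: "a \<le> 0" and s: "\<sigma> > 0" and tau: "\<tau> \<ge> 0" and d: "\<delta> > 0"
    and cx: "continuous_on {0..} x"
    and eqx: "\<And>t. t \<ge> 0 \<Longrightarrow> x t = integral {0..t} (\<lambda>s. a * x s) + \<sigma> * w t"
    and wb: "\<And>r. r \<in> {\<tau>..\<tau>+\<delta>} \<Longrightarrow> \<bar>w r - w \<tau>\<bar> \<le> \<epsilon>"
  shows "\<bar>x (\<tau>+\<delta>) - exp (a*\<delta>) * x \<tau> - \<sigma> * (w (\<tau>+\<delta>) - w \<tau>)\<bar> \<le> \<delta> * \<bar>a\<bar> * \<sigma> * \<epsilon>"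
proof -
  define I where "I r = integral {0..r} (\<lambda>s. a * x s)" for r
  define Y where "Y r = I r + \<sigma> * w \<tau>" for r
  define F where "F r = exp (-a*r) * Y r" for r
  define S where "S = {\<tau>..\<tau>+\<delta>}"
  have cax: "continuous_on {0..\<tau>+\<delta>} (\<lambda>s. a * x s)"
    by (intro continuous_intros continuous_on_subset[OF cx]) auto
  have dI: "(I has_real_derivative a * x r) (at r within S)" if "r \<in> S" for r
  proof -
    have "(I has_vector_derivative a * x r) (at r within {0..\<tau>+\<delta>})"
      unfolding I_def using integral_has_vector_derivative[OF cax] that tau S_def by auto
    then have "(I has_vector_derivative a * x r) (at r within S)"
      by (rule has_vector_derivative_within_subset) (use tau in \<open>auto simp: S_def\<close>)
    then show ?thesis by (simp add: has_real_derivative_iff_has_vector_derivative)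
  qed
  have Yx: "Y r = x r - \<sigma> * (w r - w \<tau>)" if "r \<in> S" for r
    using eqx[of r] that tau by (auto simp: Y_def I_def S_def algebra_simps)
  have dF: "(F has_field_derivative exp (-a*r) * (a * \<sigma> * (w r - w \<tau>))) (at r within S)"
    if "r \<in> S" for r
  proof -
    have "(F has_field_derivative (exp (-a*r) * (-a)) * Y r + exp (-a*r) * (a * x r)) (at r within S)"
      unfolding F_def Y_def
      by (auto intro!: derivative_eq_intros dI[OF that])
    moreover have "(exp (-a*r) * (-a)) * Y r + exp (-a*r) * (a * x r) = exp (-a*r) * (a * \<sigma> * (w r - w \<tau>))"
      unfolding Yx[OF that] by (simp add: algebra_simps)
    ultimately show ?thesis by simp
  qed
  have bd: "norm (exp (-a*r) * (a * \<sigma> * (w r - w \<tau>))) \<le> exp (-a*(\<tau>+\<delta>)) * (\<bar>a\<bar> * \<sigma> * \<epsilon>)"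
    if "r \<in> S" for r
  proof -
    have "exp (-a*r) \<le> exp (-a*(\<tau>+\<delta>))" using that a by (auto simp: S_def mult_left_mono_neg)
    moreover have "\<bar>a * \<sigma> * (w r - w \<tau>)\<bar> \<le> \<bar>a\<bar> * \<sigma> * \<epsilon>"
      using wb[of r] that s by (auto simp: S_def abs_mult intro!: mult_left_mono)
    moreover have "0 \<le> \<bar>a\<bar> * \<sigma> * \<epsilon>" using wb[of \<tau>] s d by auto
    ultimately show ?thesis
      by (metis abs_exp_cancel abs_mult real_norm_def exp_ge_zero abs_ge_zero mult_mono)
  qed
  have "norm (F (\<tau>+\<delta>) - F \<tau>) \<le> exp (-a*(\<tau>+\<delta>)) * (\<bar>a\<bar> * \<sigma> * \<epsilon>) * norm ((\<tau>+\<delta>) - \<tau>)"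
    by (rule field_differentiable_bound[OF _ dF bd]) (use d in \<open>auto simp: S_def\<close>)
  then have "\<bar>F (\<tau>+\<delta>) - F \<tau>\<bar> \<le> exp (-a*(\<tau>+\<delta>)) * (\<delta> * \<bar>a\<bar> * \<sigma> * \<epsilon>)"
    using d by (simp add: algebra_simps)
  moreover have "F (\<tau>+\<delta>) - F \<tau> = exp (-a*(\<tau>+\<delta>)) * (x (\<tau>+\<delta>) - exp (a*\<delta>) * x \<tau> - \<sigma> * (w (\<tau>+\<delta>) - w \<tau>))"
  proof -
    have "F \<tau> = exp (-a*\<tau>) * x \<tau>" using Yx[of \<tau>] d by (simp add: F_def S_def)
    moreover have "F (\<tau>+\<delta>) = exp (-a*(\<tau>+\<delta>)) * (x (\<tau>+\<delta>) - \<sigma> * (w (\<tau>+\<delta>) - w \<tau>))"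
      using Yx[of "\<tau>+\<delta>"] d by (simp add: F_def S_def)
    moreover have "exp (-a*\<tau>) = exp (-a*(\<tau>+\<delta>)) * exp (a*\<delta>)"
      by (simp add: exp_add[symmetric] algebra_simps)
    ultimately show ?thesis by (simp add: algebra_simps)
  qed
  ultimately have "exp (-a*(\<tau>+\<delta>)) * \<bar>x (\<tau>+\<delta>) - exp (a*\<delta>) * x \<tau> - \<sigma> * (w (\<tau>+\<delta>) - w \<tau>)\<bar>
      \<le> exp (-a*(\<tau>+\<delta>)) * (\<delta> * \<bar>a\<bar> * \<sigma> * \<epsilon>)"
    by (simp add: abs_mult)
  then show ?thesis by simp
qed

definition Zs :: "real \<Rightarrow> real \<Rightarrow> (real \<Rightarrow> real) \<Rightarrow> real \<Rightarrow> nat \<Rightarrow> real" where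
  "Zs a \<sigma> w \<epsilon> K = \<sigma> * (\<Sum>j<K. exp (a*\<epsilon>)^(K-1-j) * (w (real (Suc j) * \<epsilon>) - w (real j * \<epsilon>)))"

lemma Zs_Suc: "Zs a \<sigma> w \<epsilon> (Suc K) = exp (a*\<epsilon>) * Zs a \<sigma> w \<epsilon> K + \<sigma> * (w (real (Suc K) * \<epsilon>) - w (real K * \<epsilon>))"
proof -
  have "(\<Sum>j<Suc K. exp (a*\<epsilon>)^(Suc K-1-j) * (w (real (Suc j) * \<epsilon>) - w (real j * \<epsilon>)))
     = (\<Sum>j<K. exp (a*\<epsilon>) * (exp (a*\<epsilon>)^(K-1-j) * (w (real (Suc j) * \<epsilon>) - w (real j * \<epsilon>))))
       + (w (real (Suc K) * \<epsilon>) - w (real K * \<epsilon>))"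
  proof -
    have "exp (a*\<epsilon>)^(K-j) = exp (a*\<epsilon>) * exp (a*\<epsilon>)^(K-1-j)" if "j < K" for j
    proof -
      have "K - j = Suc (K-1-j)" using that by simp
      then show ?thesis by simp
    qed
    then show ?thesis by (auto intro!: sum.cong simp: mult.assoc)
  qed
  then show ?thesis unfolding Zs_def by (simp add: sum_distrib_left algebra_simps)
qed

lemma Zs_0[simp]: "Zs a \<sigma> w \<epsilon> 0 = 0" by (simp add: Zs_def)

lemma accum_bound:
  fixes w x :: "real \<Rightarrow> real" and a \<sigma> \<epsilon> \<eta> :: real
  assumes a: "a \<le> 0" and s: "\<sigma> > 0" and d: "\<epsilon> > 0" and w0: "w 0 = 0"
    and cx: "continuous_on {0..} x"
    and eqx: "\<And>t. t \<ge> 0 \<Longrightarrow> x t = integral {0..t} (\<lambda>s. a * x s) + \<sigma> * w t"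
  shows "(\<forall>r\<in>{0..real K*\<epsilon>}. \<forall>r'\<in>{0..real K*\<epsilon>}. \<bar>r - r'\<bar> \<le> \<epsilon> \<longrightarrow> \<bar>w r - w r'\<bar> \<le> \<eta>) \<longrightarrow>
     \<bar>x (real K * \<epsilon>) - Zs a \<sigma> w \<epsilon> K\<bar> \<le> real K * \<epsilon> * \<bar>a\<bar> * \<sigma> * \<eta>"
proof (induction K)
  case 0
  show ?case using eqx[of 0] w0 by simp
next
  case (Suc K)
  show ?case
  proof
    assume H: "\<forall>r\<in>{0..real (Suc K)*\<epsilon>}. \<forall>r'\<in>{0..real (Suc K)*\<epsilon>}. \<bar>r - r'\<bar> \<le> \<epsilon> \<longrightarrow> \<bar>w r - w r'\<bar> \<le> \<eta>"
    have HK: "\<forall>r\<in>{0..real K*\<epsilon>}. \<forall>r'\<in>{0..real K*\<epsilon>}. \<bar>r - r'\<bar> \<le> \<epsilon> \<longrightarrow> \<bar>w r - w r'\<bar> \<le> \<eta>"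
      using H d by (auto simp: distrib_right)
    have IH: "\<bar>x (real K * \<epsilon>) - Zs a \<sigma> w \<epsilon> K\<bar> \<le> real K * \<epsilon> * \<bar>a\<bar> * \<sigma> * \<eta>"
      using Suc.IH HK by blast
    have st: "\<bar>x (real K * \<epsilon> + \<epsilon>) - exp (a*\<epsilon>) * x (real K * \<epsilon>) - \<sigma> * (w (real K * \<epsilon> + \<epsilon>) - w (real K * \<epsilon>))\<bar> \<le> \<epsilon> * \<bar>a\<bar> * \<sigma> * \<eta>"
    proof (rule step_bound[OF a s _ d cx eqx])
      show "0 \<le> real K * \<epsilon>" using d by simp
      fix r assume "r \<in> {real K * \<epsilon>..real K * \<epsilon> + \<epsilon>}"
      then have "r \<in> {0..real (Suc K)*\<epsilon>}" "real K * \<epsilon> \<in> {0..real (Suc K)*\<epsilon>}" "\<bar>r - real K * \<epsilon>\<bar> \<le> \<epsilon>"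
        using d by (auto simp: distrib_right intro: order_trans[rotated])
      then show "\<bar>w r - w (real K * \<epsilon>)\<bar> \<le> \<eta>" using H by blast
    qed auto
    have e1: "real (Suc K) * \<epsilon> = real K * \<epsilon> + \<epsilon>" by (simp add: distrib_right)
    have "\<bar>x (real (Suc K) * \<epsilon>) - Zs a \<sigma> w \<epsilon> (Suc K)\<bar>
       = \<bar>(x (real K * \<epsilon> + \<epsilon>) - exp (a*\<epsilon>) * x (real K * \<epsilon>) - \<sigma> * (w (real K * \<epsilon> + \<epsilon>) - w (real K * \<epsilon>)))
          + exp (a*\<epsilon>) * (x (real K * \<epsilon>) - Zs a \<sigma> w \<epsilon> K)\<bar>"
      unfolding Zs_Suc e1 by (simp add: algebra_simps)
    also have "\<dots> \<le> \<epsilon> * \<bar>a\<bar> * \<sigma> * \<eta> + exp (a*\<epsilon>) * \<bar>x (real K * \<epsilon>) - Zs a \<sigma> w \<epsilon> K\<bar>"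
      using st abs_triangle_ineq[of "x (real K * \<epsilon> + \<epsilon>) - exp (a*\<epsilon>) * x (real K * \<epsilon>) - \<sigma> * (w (real K * \<epsilon> + \<epsilon>) - w (real K * \<epsilon>))" "exp (a*\<epsilon>) * (x (real K * \<epsilon>) - Zs a \<sigma> w \<epsilon> K)"]
      unfolding abs_mult abs_exp_cancel by linarith
    also have "\<dots> \<le> \<epsilon> * \<bar>a\<bar> * \<sigma> * \<eta> + 1 * (real K * \<epsilon> * \<bar>a\<bar> * \<sigma> * \<eta>)"
    proof -
      have "exp (a*\<epsilon>) \<le> 1" using a d by (simp add: mult_nonpos_nonneg)
      moreover have "0 \<le> real K * \<epsilon> * \<bar>a\<bar> * \<sigma> * \<eta>" using IH by linarith
      ultimately have "exp (a*\<epsilon>) * \<bar>x (real K * \<epsilon>) - Zs a \<sigma> w \<epsilon> K\<bar> \<le> 1 * (real K * \<epsilon> * \<bar>a\<bar> * \<sigma> * \<eta>)"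
        using IH by (intro mult_mono) auto
      then show ?thesis by linarith
    qed
    also have "\<dots> = real (Suc K) * \<epsilon> * \<bar>a\<bar> * \<sigma> * \<eta>" by (simp add: algebra_simps)
    finally show "\<bar>x (real (Suc K) * \<epsilon>) - Zs a \<sigma> w \<epsilon> (Suc K)\<bar> \<le> real (Suc K) * \<epsilon> * \<bar>a\<bar> * \<sigma> * \<eta>" .
  qed
qed

lemma Zs_converges:
  fixes w x :: "real \<Rightarrow> real" and a \<sigma> \<delta> :: real
  assumes a: "a \<le> 0" and s: "\<sigma> > 0" and d: "\<delta> > 0" and w0: "w 0 = 0"
    and cw: "continuous_on {0..} w"
    and cx: "continuous_on {0..} x"
    and eqx: "\<And>t. t \<ge> 0 \<Longrightarrow> x t = integral {0..t} (\<lambda>s. a * x s) + \<sigma> * w t"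
  shows "(\<lambda>n. Zs a \<sigma> w (\<delta> / real (Suc n)) (K * Suc n)) \<longlonglongrightarrow> x (real K * \<delta>)"
proof (rule LIMSEQ_I)
  fix e :: real assume e: "e > 0"
  define C where "C = real K * \<delta> * \<bar>a\<bar> * \<sigma> + 1"
  have "0 \<le> real K * \<delta> * \<bar>a\<bar> * \<sigma>" using d s by (intro mult_nonneg_nonneg) auto
  then have C: "C > 0" unfolding C_def by linarith
  define \<eta> where "\<eta> = e / (2*C)"
  have eta: "\<eta> > 0" using e C by (simp add: \<eta>_def)
  have uc: "uniformly_continuous_on {0..real K * \<delta>} w"
    by (rule compact_uniformly_continuous) (auto intro: continuous_on_subset[OF cw])
  then obtain dd where dd: "dd > 0" and ddH: "\<And>r r'. r \<in> {0..real K * \<delta>} \<Longrightarrow> r' \<in> {0..real K * \<delta>}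
      \<Longrightarrow> dist r' r < dd \<Longrightarrow> dist (w r') (w r) < \<eta>"
    unfolding uniformly_continuous_on_def using eta by metis
  obtain n0 :: nat where n0: "\<delta> / dd < real n0" using reals_Archimedean2 by blast
  show "\<exists>no. \<forall>n\<ge>no. norm (Zs a \<sigma> w (\<delta> / real (Suc n)) (K * Suc n) - x (real K * \<delta>)) < e"
  proof (intro exI allI impI)
    fix n assume "n \<ge> n0"
    define \<epsilon> where "\<epsilon> = \<delta> / real (Suc n)"
    have ep: "\<epsilon> > 0" using d by (simp add: \<epsilon>_def)
    have "\<delta> / dd < real (Suc n)" using n0 \<open>n \<ge> n0\<close> by linarith
    then have epdd: "\<epsilon> < dd" using dd d unfolding \<epsilon>_def by (simp add: field_simps)
    have KK: "real (K * Suc n) * \<epsilon> = real K * \<delta>" unfolding \<epsilon>_def by (simp add: field_simps)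
    have "\<forall>r\<in>{0..real (K * Suc n)*\<epsilon>}. \<forall>r'\<in>{0..real (K * Suc n)*\<epsilon>}. \<bar>r - r'\<bar> \<le> \<epsilon> \<longrightarrow> \<bar>w r - w r'\<bar> \<le> \<eta>"
      unfolding KK
    proof (intro ballI impI)
      fix r r' assume r: "r \<in> {0..real K * \<delta>}" "r' \<in> {0..real K * \<delta>}" "\<bar>r - r'\<bar> \<le> \<epsilon>"
      then have "dist r r' < dd" using epdd by (simp add: dist_real_def)
      then have "dist (w r) (w r') < \<eta>" using ddH[OF r(2) r(1)] by simp
      then show "\<bar>w r - w r'\<bar> \<le> \<eta>" by (simp add: dist_real_def)
    qed
    then have "\<bar>x (real (K * Suc n) * \<epsilon>) - Zs a \<sigma> w \<epsilon> (K * Suc n)\<bar> \<le> real (K * Suc n) * \<epsilon> * \<bar>a\<bar> * \<sigma> * \<eta>"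
      using accum_bound[OF a s ep w0 cx eqx] by blast
    then have "\<bar>x (real K * \<delta>) - Zs a \<sigma> w \<epsilon> (K * Suc n)\<bar> \<le> real K * \<delta> * \<bar>a\<bar> * \<sigma> * \<eta>"
      unfolding KK by (simp add: mult.assoc)
    also have "\<dots> \<le> C * \<eta>" unfolding C_def using eta by (simp add: algebra_simps)
    also have "\<dots> < e" unfolding \<eta>_def using C e by simp
    finally show "norm (Zs a \<sigma> w (\<delta> / real (Suc n)) (K * Suc n) - x (real K * \<delta>)) < e"
      by (simp add: \<epsilon>_def abs_minus_commute)
  qed
qed

lemma (in prob_space) char_normal_scaled:
  assumes D: "distributed M lborel D (\<lambda>y. ennreal (normal_density 0 s y))" and s: "s > 0"
  shows "(CLINT \<omega>|M. iexp (t * D \<omega>)) = complex_of_real (exp (-(s^2 * t^2)/2))"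
proof -
  have D': "distributed M lborel (\<lambda>\<omega>. (D \<omega> - 0) / s) (\<lambda>y. ennreal (std_normal_density y))"
    using normal_standard_normal_convert[OF s] D by blast
  have dm[measurable]: "D \<in> borel_measurable M" using D by (simp add: distributed_def)
  have eq: "distr M lborel (\<lambda>\<omega>. D \<omega> / s) = std_normal_distribution"
    using D' by (simp add: distributed_def)
  have "(CLINT \<omega>|M. iexp (t * D \<omega>)) = (CLINT \<omega>|M. iexp ((t * s) * (D \<omega> / s)))"
    using s by (simp add: field_simps)
  also have "\<dots> = (CLINT y|distr M lborel (\<lambda>\<omega>. D \<omega> / s). iexp ((t * s) * y))"
    by (subst integral_distr) auto
  also have "\<dots> = char std_normal_distribution (t * s)"
    unfolding eq char_def by simp
  also have "\<dots> = complex_of_real (exp (-(s^2 * t^2)/2))"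
    unfolding char_std_normal_distribution by (simp add: power_mult_distrib mult.commute)
  finally show ?thesis .
qed

lemma (in prob_space) char_lincomb:
  assumes ind: "indep_vars (\<lambda>_. borel) D I" and fin: "finite I"
    and nd: "\<And>j. j \<in> I \<Longrightarrow> distributed M lborel (D j) (\<lambda>y. ennreal (normal_density 0 s y))"
    and s: "s > 0"
  shows "(CLINT \<omega>|M. iexp (u * (\<Sum>j\<in>I. c j * D j \<omega>))) = complex_of_real (exp (-(s^2 * (\<Sum>j\<in>I. (c j)^2) * u^2)/2))"
proof -
  have ind2: "indep_vars (\<lambda>_. borel) (\<lambda>j \<omega>. c j * D j \<omega>) I"
    by (rule indep_vars_compose2[OF ind]) auto
  have rvj: "random_variable borel (D j)" if "j \<in> I" for j
    using ind that by (auto simp: indep_vars_def)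
  have rv: "random_variable borel (\<lambda>\<omega>. \<Sum>j\<in>I. c j * D j \<omega>)"
    using rvj by (intro borel_measurable_sum) auto
  have "(CLINT \<omega>|M. iexp (u * (\<Sum>j\<in>I. c j * D j \<omega>))) = char (distr M borel (\<lambda>\<omega>. \<Sum>j\<in>I. c j * D j \<omega>)) u"
    unfolding char_def by (subst integral_distr[OF rv]) auto
  also have "\<dots> = (\<Prod>j\<in>I. char (distr M borel (\<lambda>\<omega>. c j * D j \<omega>)) u)"
    by (rule char_distr_sum[OF ind2])
  also have "\<dots> = (\<Prod>j\<in>I. complex_of_real (exp (-(s^2 * (u * c j)^2)/2)))"
  proof (rule prod.cong[OF refl])
    fix j assume j: "j \<in> I"
    have "char (distr M borel (\<lambda>\<omega>. c j * D j \<omega>)) u = (CLINT \<omega>|M. iexp ((u * c j) * D j \<omega>))"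
      unfolding char_def using rvj[OF j] by (subst integral_distr) (auto simp: mult.assoc)
    also have "\<dots> = complex_of_real (exp (-(s^2 * (u * c j)^2)/2))"
      by (rule char_normal_scaled[OF nd[OF j] s])
    finally show "char (distr M borel (\<lambda>\<omega>. c j * D j \<omega>)) u = complex_of_real (exp (-(s^2 * (u * c j)^2)/2))" .
  qed
  also have "\<dots> = complex_of_real (exp (\<Sum>j\<in>I. -(s^2 * (u * c j)^2)/2))"
    by (simp add: exp_sum[OF fin])
  also have "(\<Sum>j\<in>I. -(s^2 * (u * c j)^2)/2) = -(s^2 * (\<Sum>j\<in>I. (c j)^2) * u^2)/2"
    by (simp add: sum_divide_distrib[symmetric] sum_negf sum_distrib_left sum_distrib_right power_mult_distrib algebra_simps)
  finally show ?thesis .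
qed

lemma (in prob_space) gauss_limit:
  fixes Y :: "'a \<Rightarrow> real" and Yn :: "nat \<Rightarrow> 'a \<Rightarrow> real"
  assumes [measurable]: "\<And>n. Yn n \<in> borel_measurable M" "Y \<in> borel_measurable M"
    and lim: "\<And>\<omega>. \<omega> \<in> space M \<Longrightarrow> (\<lambda>n. Yn n \<omega>) \<longlonglongrightarrow> Y \<omega>"
    and ch: "\<And>n u. (CLINT \<omega>|M. iexp (u * Yn n \<omega>)) = complex_of_real (exp (-(v n * u^2)/2))"
    and v: "v \<longlonglongrightarrow> v0" and v0: "v0 > 0"
  shows "distr M borel (\<lambda>\<omega>. Y \<omega> / sqrt v0) = std_normal_distribution"
proof (rule Levy_uniqueness)
  show "real_distribution (distr M borel (\<lambda>\<omega>. Y \<omega> / sqrt v0))" by (rule real_distribution_distr) simp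
  show "real_distribution std_normal_distribution" by (rule real_dist_normal_dist)
  show "char (distr M borel (\<lambda>\<omega>. Y \<omega> / sqrt v0)) = char std_normal_distribution"
  proof
    fix u :: real
    have "char (distr M borel (\<lambda>\<omega>. Y \<omega> / sqrt v0)) u = (CLINT \<omega>|M. iexp ((u / sqrt v0) * Y \<omega>))"
      unfolding char_def by (subst integral_distr) auto
    moreover have "(\<lambda>n. CLINT \<omega>|M. iexp ((u / sqrt v0) * Yn n \<omega>)) \<longlonglongrightarrow> (CLINT \<omega>|M. iexp ((u / sqrt v0) * Y \<omega>))"
    proof (rule integral_dominated_convergence[where w="\<lambda>_. 1"])
      show "AE \<omega> in M. (\<lambda>n. iexp ((u / sqrt v0) * Yn n \<omega>)) \<longlonglongrightarrow> iexp ((u / sqrt v0) * Y \<omega>)"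
      proof (rule AE_I2)
        fix \<omega> assume "\<omega> \<in> space M"
        show "(\<lambda>n. iexp ((u / sqrt v0) * Yn n \<omega>)) \<longlonglongrightarrow> iexp ((u / sqrt v0) * Y \<omega>)"
          by (rule isCont_tendsto_compose[OF isCont_iexp]) (intro tendsto_mult_left lim \<open>\<omega> \<in> space M\<close>)
      qed
      show "\<And>n. AE \<omega> in M. norm (iexp ((u / sqrt v0) * Yn n \<omega>)) \<le> 1"
        by (simp del: of_real_mult)
    qed auto
    moreover have "(\<lambda>n. CLINT \<omega>|M. iexp ((u / sqrt v0) * Yn n \<omega>)) = (\<lambda>n. complex_of_real (exp (-(v n * (u / sqrt v0)^2)/2)))"
      using ch by presburger
    moreover have "(\<lambda>n. complex_of_real (exp (-(v n * (u / sqrt v0)^2)/2))) \<longlonglongrightarrow> complex_of_real (exp (-(v0 * (u / sqrt v0)^2)/2))"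
      by (intro tendsto_intros v) simp
    moreover have "v0 * (u / sqrt v0)^2 = u^2" using v0 by (simp add: power_divide real_sqrt_pow2)
    ultimately have "char (distr M borel (\<lambda>\<omega>. Y \<omega> / sqrt v0)) u = complex_of_real (exp (-(u^2)/2))"
      using LIMSEQ_unique by metis
    then show "char (distr M borel (\<lambda>\<omega>. Y \<omega> / sqrt v0)) u = char std_normal_distribution u"
      unfolding char_std_normal_distribution by simp
  qed
qed

lemma (in prob_space) gauss_moments:
  fixes Y :: "'a \<Rightarrow> real"
  assumes [measurable]: "Y \<in> borel_measurable M"
    and eq: "distr M borel (\<lambda>\<omega>. Y \<omega> / sqrt v0) = std_normal_distribution" and v0: "v0 > 0"
  shows "integrable M (\<lambda>\<omega>. (Y \<omega>)^2)" "expectation (\<lambda>\<omega>. (Y \<omega>)^2) = v0"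
    "integrable M (\<lambda>\<omega>. (Y \<omega>)^4)" "expectation (\<lambda>\<omega>. (Y \<omega>)^4) = 3 * v0^2"
proof -
  have I: "integrable M (\<lambda>\<omega>. (Y \<omega> / sqrt v0)^k)" for k
  proof -
    have "integrable (distr M borel (\<lambda>\<omega>. Y \<omega> / sqrt v0)) (\<lambda>x. x^k)"
      unfolding eq by (rule integrable_std_normal_distribution_moment)
    then show ?thesis by (subst (asm) integrable_distr_eq) auto
  qed
  have E: "expectation (\<lambda>\<omega>. (Y \<omega> / sqrt v0)^(2*k)) = fact (2 * k) / (2^k * fact k)" for k
  proof -
    have "expectation (\<lambda>\<omega>. (Y \<omega> / sqrt v0)^(2*k)) = (LINT x|distr M borel (\<lambda>\<omega>. Y \<omega> / sqrt v0). x^(2*k))"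
      by (subst integral_distr) auto
    then show ?thesis unfolding eq using std_normal_distribution_even_moments(1) by simp
  qed
  have p2: "(Y \<omega>)^2 = v0 * (Y \<omega> / sqrt v0)^2" for \<omega> using v0 by (simp add: power_divide)
  have p4: "(Y \<omega>)^4 = v0^2 * (Y \<omega> / sqrt v0)^4" for \<omega>
  proof -
    have "(sqrt v0)^4 = v0^2" using v0 by (metis power2_eq_square real_sqrt_pow2 less_imp_le power_mult numeral_Bit0 power_add mult_2)
    then show ?thesis using v0 by (simp add: power_divide)
  qed
  show "integrable M (\<lambda>\<omega>. (Y \<omega>)^2)" unfolding p2 using I by auto
  show "integrable M (\<lambda>\<omega>. (Y \<omega>)^4)" unfolding p4 using I by auto
  have e2: "expectation (\<lambda>\<omega>. (Y \<omega> / sqrt v0)^2) = 1" using E[of 1] by simp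
  have "expectation (\<lambda>\<omega>. (Y \<omega>)^2) = expectation (\<lambda>\<omega>. v0 * (Y \<omega> / sqrt v0)^2)" unfolding p2 ..
  also have "\<dots> = v0 * expectation (\<lambda>\<omega>. (Y \<omega> / sqrt v0)^2)" by (rule integral_mult_right_zero)
  finally show "expectation (\<lambda>\<omega>. (Y \<omega>)^2) = v0" unfolding e2 by simp
  have e4: "expectation (\<lambda>\<omega>. (Y \<omega> / sqrt v0)^4) = 3" using E[of 2] by (simp add: fact_numeral)
  have "expectation (\<lambda>\<omega>. (Y \<omega>)^4) = expectation (\<lambda>\<omega>. v0^2 * (Y \<omega> / sqrt v0)^4)" unfolding p4 ..
  also have "\<dots> = v0^2 * expectation (\<lambda>\<omega>. (Y \<omega> / sqrt v0)^4)" by (rule integral_mult_right_zero)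
  finally show "expectation (\<lambda>\<omega>. (Y \<omega>)^4) = 3 * v0^2" unfolding e4 by simp
qed

lemma lim_ratio:
  fixes a \<delta> :: real assumes a: "a < 0" and d: "\<delta> > 0"
  shows "(\<lambda>n. (\<delta>/real (Suc n)) / (exp (2*a*(\<delta>/real (Suc n))) - 1)) \<longlonglongrightarrow> 1/(2*a)"
proof -
  define b where "b n = 2*a*(\<delta>/real (Suc n))" for n
  have D: "((\<lambda>y::real. (exp y - 1) / y) \<longlongrightarrow> 1) (at 0)"
    using DERIV_exp[of 0] unfolding has_field_derivative_iff by simp
  have "(\<lambda>n. (2*a*\<delta>) * inverse (real (Suc n))) \<longlonglongrightarrow> (2*a*\<delta>)*0"
    by (intro tendsto_mult LIMSEQ_inverse_real_of_nat tendsto_const)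
  moreover have "b = (\<lambda>n. (2*a*\<delta>) * inverse (real (Suc n)))" by (auto simp: b_def fun_eq_iff divide_inverse)
  ultimately have b0: "b \<longlonglongrightarrow> 0" by simp
  have bne: "b n \<noteq> 0" for n using a d by (simp add: b_def)
  have "filterlim b (at 0) sequentially"
    using b0 bne by (simp add: filterlim_at)
  then have "(\<lambda>n. (exp (b n) - 1) / b n) \<longlonglongrightarrow> 1"
    using D filterlim_compose by blast
  then have "(\<lambda>n. (1/(2*a)) / ((exp (b n) - 1) / b n)) \<longlonglongrightarrow> (1/(2*a)) / 1"
    by (intro tendsto_intros) auto
  moreover have "(1/(2*a)) / ((exp (b n) - 1) / b n) = (\<delta>/real (Suc n)) / (exp (2*a*(\<delta>/real (Suc n))) - 1)" for n
    using a by (simp add: b_def field_simps)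
  ultimately show ?thesis by simp
qed

lemma var_closed:
  fixes \<rho> \<sigma> u1 u2 :: real and A B :: nat
  assumes AB: "A \<le> B"
  shows "(\<Sum>j<B. (\<sigma> * (u1 * (if j < A then \<rho>^(A-1-j) else 0) + u2 * \<rho>^(B-1-j)))^2)
    = \<sigma>^2 * (u1^2 * (\<Sum>i<A. (\<rho>^2)^i) + 2*u1*u2 * \<rho>^(B-A) * (\<Sum>i<A. (\<rho>^2)^i) + u2^2 * (\<Sum>i<B. (\<rho>^2)^i))"
proof -
  have pt: "(\<sigma> * (u1 * (if j < A then \<rho>^(A-1-j) else 0) + u2 * \<rho>^(B-1-j)))^2
     = \<sigma>^2 * (u1^2 * (if j < A then (\<rho>^2)^(A-1-j) else 0) + 2*u1*u2 * \<rho>^(B-A) * (if j < A then (\<rho>^2)^(A-1-j) else 0)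
        + u2^2 * (\<rho>^2)^(B-1-j))" if "j < B" for j
  proof (cases "j < A")
    case True
    have "\<rho>^(A-1-j) * \<rho>^(B-1-j) = \<rho>^(B-A) * (\<rho>^2)^(A-1-j)"
    proof -
      have "(A-1-j) + (B-1-j) = (B-A) + 2*(A-1-j)" using True AB by simp
      then show ?thesis by (metis power_add power_mult)
    qed
    then show ?thesis using True by (simp add: power2_eq_square power_mult_distrib algebra_simps power_mult[symmetric])
  next
    case False
    then show ?thesis by (simp add: power2_eq_square power_mult_distrib algebra_simps power_mult[symmetric])
  qed
  have r: "(\<Sum>j<L. (\<rho>^2)^(L-1-j)) = (\<Sum>i<L. (\<rho>^2)^i)" for L
    using sum.nat_diff_reindex[of "\<lambda>i. (\<rho>^2)^i" L] by simp
  have c: "(\<Sum>j<B. (if j < A then f j else 0)) = (\<Sum>j<A. f j)" for f :: "nat \<Rightarrow> real"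
  proof -
    have "(\<Sum>j<B. (if j < A then f j else 0)) = (\<Sum>j\<in>{..<B} \<inter> {j. j < A}. f j)"
      by (simp add: sum.inter_restrict)
    also have "{..<B} \<inter> {j. j < A} = {..<A}" using AB by auto
    finally show ?thesis .
  qed
  have "(\<Sum>j<B. (\<sigma> * (u1 * (if j < A then \<rho>^(A-1-j) else 0) + u2 * \<rho>^(B-1-j)))^2)
    = (\<Sum>j<B. \<sigma>^2 * (u1^2 * (if j < A then (\<rho>^2)^(A-1-j) else 0) + 2*u1*u2 * \<rho>^(B-A) * (if j < A then (\<rho>^2)^(A-1-j) else 0)
        + u2^2 * (\<rho>^2)^(B-1-j)))"
    by (rule sum.cong[OF refl], rule pt, simp)
  also have "\<dots> = \<sigma>^2 * (u1^2 * (\<Sum>j<B. (if j < A then (\<rho>^2)^(A-1-j) else 0)) + 2*u1*u2 * \<rho>^(B-A) * (\<Sum>j<B. (if j < A then (\<rho>^2)^(A-1-j) else 0))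
        + u2^2 * (\<Sum>j<B. (\<rho>^2)^(B-1-j)))"
    by (simp only: distrib_left sum.distrib sum_distrib_left)
  also have "\<dots> = \<sigma>^2 * (u1^2 * (\<Sum>i<A. (\<rho>^2)^i) + 2*u1*u2 * \<rho>^(B-A) * (\<Sum>i<A. (\<rho>^2)^i) + u2^2 * (\<Sum>i<B. (\<rho>^2)^i))"
    unfolding c r ..
  finally show ?thesis .
qed

lemma exp_pow: "exp (x::real) ^ n = exp (real n * x)" by (simp add: exp_of_nat_mult)

lemma ite_sum_restrict:
  fixes f :: "nat \<Rightarrow> real" assumes "A \<le> B"
  shows "(\<Sum>j<B. (if j < A then f j else 0)) = (\<Sum>j<A. f j)"
proof -
  have "(\<Sum>j<B. (if j < A then f j else 0)) = (\<Sum>j\<in>{..<B} \<inter> {j. j < A}. f j)"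
    by (simp add: sum.inter_restrict)
  also have "{..<B} \<inter> {j. j < A} = {..<A}" using assms by auto
  finally show ?thesis .
qed

lemma alg_v: "(e::real) \<noteq> 0 \<Longrightarrow> \<epsilon> * (\<sigma>^2 * (u1^2 * (A / e) + 2*u1*u2*R*(A/e) + u2^2*(B/e))) = (\<epsilon> / e) * (\<sigma>^2 * (u1^2*A + 2*u1*u2*R*A + u2^2*B))"
  by (simp add: field_simps)

lemma gauss_pair:
  fixes P :: "'a measure" and W X :: "real \<Rightarrow> 'a \<Rightarrow> real"
  assumes W: "wiener_process P W" and X: "langevin_solution P a \<sigma> W X"
    and a: "a < 0" and s: "\<sigma> > 0" and d: "\<delta> > 0" and JK: "J \<le> K"
    and Qdef: "Q = \<sigma>^2 * (u1^2*(exp(2*a*(real J*\<delta>)) - 1) + 2*u1*u2*exp(a*((real K - real J)*\<delta>))*(exp(2*a*(real J*\<delta>)) - 1) + u2^2*(exp(2*a*(real K*\<delta>)) - 1))"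
    and Qpos: "Q/(2*a) > 0"
  shows "distr P borel (\<lambda>\<omega>. (u1 * X (real J*\<delta>) \<omega> + u2 * X (real K * \<delta>) \<omega>) / sqrt (Q/(2*a))) = std_normal_distribution"
proof -
  interpret prob_space P using W by (simp add: wiener_process_def)
  have Wm[measurable]: "\<And>t. W t \<in> borel_measurable P" using W by (simp add: wiener_process_def)
  have Xm[measurable]: "\<And>t. X t \<in> borel_measurable P" using X by (simp add: langevin_solution_def)
  define \<epsilon> where "\<epsilon> n = \<delta> / real (Suc n)" for n
  have ep: "\<epsilon> n > 0" for n using d by (simp add: \<epsilon>_def)
  define \<rho> where "\<rho> n = exp (a * \<epsilon> n)" for n
  define D where "D n j \<omega> = W (real (Suc j) * \<epsilon> n) \<omega> - W (real j * \<epsilon> n) \<omega>" for n j \<omega>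
  define c where "c n j = \<sigma> * (u1 * (if j < J*Suc n then \<rho> n^(J*Suc n-1-j) else 0) + u2 * \<rho> n^(K*Suc n-1-j))" for n j
  define Yn where "Yn n \<omega> = u1 * Zs a \<sigma> (\<lambda>t. W t \<omega>) (\<epsilon> n) (J*Suc n) + u2 * Zs a \<sigma> (\<lambda>t. W t \<omega>) (\<epsilon> n) (K*Suc n)" for n \<omega>
  have JKm: "J * Suc n \<le> K * Suc n" for n using JK by (rule mult_le_mono1)
  have Yn_eq: "Yn n \<omega> = (\<Sum>j<K*Suc n. c n j * D n j \<omega>)" for n \<omega>
  proof -
    have "(\<Sum>j<K*Suc n. c n j * D n j \<omega>) = \<sigma> * u1 * (\<Sum>j<K*Suc n. (if j < J*Suc n then \<rho> n^(J*Suc n-1-j) * D n j \<omega> else 0))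
        + \<sigma> * u2 * (\<Sum>j<K*Suc n. \<rho> n^(K*Suc n-1-j) * D n j \<omega>)"
    proof -
      have "c n j * D n j \<omega> = \<sigma> * u1 * (if j < J*Suc n then \<rho> n^(J*Suc n-1-j) * D n j \<omega> else 0)
        + \<sigma> * u2 * (\<rho> n^(K*Suc n-1-j) * D n j \<omega>)" for j
        unfolding c_def by (cases "j < J*Suc n") (simp_all add: algebra_simps)
      then show ?thesis by (simp only: sum.distrib sum_distrib_left)
    qed
    also have "\<dots> = \<sigma> * u1 * (\<Sum>j<J*Suc n. \<rho> n^(J*Suc n-1-j) * D n j \<omega>)
        + \<sigma> * u2 * (\<Sum>j<K*Suc n. \<rho> n^(K*Suc n-1-j) * D n j \<omega>)"
      by (simp only: ite_sum_restrict[OF JKm])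
    also have "\<dots> = Yn n \<omega>"
      unfolding Yn_def Zs_def D_def \<rho>_def by (simp add: algebra_simps)
    finally show ?thesis by simp
  qed
  have Ynm[measurable]: "Yn n \<in> borel_measurable P" for n
    unfolding Yn_def Zs_def by measurable
  have Ym[measurable]: "(\<lambda>\<omega>. u1 * X (real J*\<delta>) \<omega> + u2 * X (real K * \<delta>) \<omega>) \<in> borel_measurable P"
    by measurable
  have lim: "(\<lambda>n. Yn n \<omega>) \<longlonglongrightarrow> u1 * X (real J*\<delta>) \<omega> + u2 * X (real K * \<delta>) \<omega>" if "\<omega> \<in> space P" for \<omega>
  proof -
    have w0: "W 0 \<omega> = 0" and cw: "continuous_on {0..} (\<lambda>t. W t \<omega>)"
      using W that by (auto simp: wiener_process_def)
    have cx: "continuous_on {0..} (\<lambda>t. X t \<omega>)"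
      and eqx: "\<And>t. t \<ge> 0 \<Longrightarrow> X t \<omega> = integral {0..t} (\<lambda>s. a * X s \<omega>) + \<sigma> * W t \<omega>"
      using X that by (auto simp: langevin_solution_def)
    note cv = Zs_converges[OF _ s d w0 cw cx eqx]
    show ?thesis unfolding Yn_def \<epsilon>_def
      using a by (intro tendsto_intros cv) auto
  qed
  define v where "v n = \<epsilon> n * (\<Sum>j<K*Suc n. (c n j)^2)" for n
  have ch: "(CLINT \<omega>|P. iexp (u * Yn n \<omega>)) = complex_of_real (exp (-(v n * u^2)/2))" for n u
  proof -
    have ind: "indep_vars (\<lambda>_. borel) (D n) {..<K*Suc n}"
    proof -
      have "prob_space.indep_vars P (\<lambda>_. borel) (\<lambda>i \<omega>. W ((\<lambda>j. real j * \<epsilon> n) (Suc i)) \<omega> - W ((\<lambda>j. real j * \<epsilon> n) i) \<omega>) {..<K*Suc n}"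
        using W ep[of n] unfolding wiener_process_def
        by (elim conjE allE[of _ "K*Suc n"] allE[of _ "\<lambda>j. real j * \<epsilon> n"]) (simp add: distrib_right)
      then show ?thesis unfolding D_def by simp
    qed
    have nd: "distributed P lborel (D n j) (\<lambda>y. ennreal (normal_density 0 (sqrt (\<epsilon> n)) y))" for j
    proof -
      have "distributed P lborel (\<lambda>\<omega>. W (real (Suc j) * \<epsilon> n) \<omega> - W (real j * \<epsilon> n) \<omega>)
          (\<lambda>y. ennreal (normal_density 0 (sqrt (real (Suc j) * \<epsilon> n - real j * \<epsilon> n)) y))"
      proof -
        have "\<forall>s t. 0 \<le> s \<longrightarrow> s < t \<longrightarrow> distributed P lborel (\<lambda>\<omega>. W t \<omega> - W s \<omega>)
          (\<lambda>y. ennreal (normal_density 0 (sqrt (t - s)) y))" using W unfolding wiener_process_def by blast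
        moreover have "0 \<le> real j * \<epsilon> n" "real j * \<epsilon> n < real (Suc j) * \<epsilon> n" using ep[of n] by (auto simp: distrib_right)
        ultimately show ?thesis by blast
      qed
      moreover have "real (Suc j) * \<epsilon> n - real j * \<epsilon> n = \<epsilon> n" by (simp add: distrib_right)
      ultimately show ?thesis unfolding D_def by simp
    qed
    have "(CLINT \<omega>|P. iexp (u * Yn n \<omega>)) = (CLINT \<omega>|P. iexp (u * (\<Sum>j<K*Suc n. c n j * D n j \<omega>)))"
      by (simp add: Yn_eq)
    also have "\<dots> = complex_of_real (exp (-((sqrt (\<epsilon> n))^2 * (\<Sum>j<K*Suc n. (c n j)^2) * u^2)/2))"
      by (rule char_lincomb[OF ind _ nd]) (use ep[of n] in auto)
    also have "(sqrt (\<epsilon> n))^2 = \<epsilon> n" using ep[of n] by simp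
    finally show ?thesis by (simp add: v_def)
  qed
  have vlim: "v \<longlonglongrightarrow> Q/(2*a)"
  proof -
    have veq: "v n = (\<epsilon> n / (exp (2*a*\<epsilon> n) - 1)) * Q" for n
    proof -
      have r2: "(\<rho> n)^2 = exp (2*a*\<epsilon> n)" unfolding \<rho>_def by (simp add: exp_pow)
      have r1: "exp (2*a*\<epsilon> n) \<noteq> 1" using a ep[of n] by simp
      have G: "(\<Sum>i<L. ((\<rho> n)^2)^i) = (exp (2*a*(real L * \<epsilon> n)) - 1) / (exp (2*a*\<epsilon> n) - 1)" for L
        unfolding r2 sum_gp_strict using r1 by (simp add: exp_pow field_simps)
      have mJ: "real (J * Suc n) * \<epsilon> n = real J * \<delta>" and mK: "real (K * Suc n) * \<epsilon> n = real K * \<delta>"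
        unfolding \<epsilon>_def by (simp_all add: field_simps)
      have rKJ: "\<rho> n ^ (K * Suc n - J * Suc n) = exp (a*((real K - real J)*\<delta>))"
      proof -
        have "real (K*Suc n - J*Suc n) * (a*\<epsilon> n) = a * (real (K*Suc n) * \<epsilon> n - real (J*Suc n) * \<epsilon> n)"
          by (simp only: of_nat_diff[OF JKm[of n]]) (simp add: algebra_simps)
        also have "\<dots> = a*((real K - real J)*\<delta>)" unfolding mJ mK by (simp add: algebra_simps)
        finally show ?thesis unfolding \<rho>_def exp_pow by simp
      qed
      show ?thesis
        unfolding v_def c_def var_closed[OF JKm] G mJ mK rKJ Qdef
        by (rule alg_v) (use r1 in simp)
    qed
    have "(\<lambda>n. (\<epsilon> n / (exp (2*a*\<epsilon> n) - 1)) * Q) \<longlonglongrightarrow> (1/(2*a)) * Q"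
      unfolding \<epsilon>_def by (intro tendsto_mult lim_ratio[OF a d] tendsto_const)
    then show ?thesis unfolding veq[abs_def] by simp
  qed
  show ?thesis
    by (rule gauss_limit[OF Ynm Ym lim ch vlim Qpos])
qed

definition Cf :: "real \<Rightarrow> real \<Rightarrow> real \<Rightarrow> real \<Rightarrow> real" where
  "Cf a \<sigma> s t = \<sigma>^2 * (exp (a*(s+t)) - exp (a*\<bar>t-s\<bar>)) / (2*a)"

lemma Cf_sym: "Cf a \<sigma> s t = Cf a \<sigma> t s" by (simp add: Cf_def add.commute abs_minus_commute)

lemma X0:
  assumes W: "wiener_process P W" and X: "langevin_solution P a \<sigma> W X" and "\<omega> \<in> space P"
  shows "X 0 \<omega> = 0"
  using assms by (auto simp: wiener_process_def langevin_solution_def)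

lemma moment_single:
  fixes P :: "'a measure" and W X :: "real \<Rightarrow> 'a \<Rightarrow> real"
  assumes W: "wiener_process P W" and X: "langevin_solution P a \<sigma> W X"
    and a: "a < 0" and s: "\<sigma> > 0" and t: "t \<ge> 0"
  shows "integrable P (\<lambda>\<omega>. (X t \<omega>)^2)" "prob_space.expectation P (\<lambda>\<omega>. (X t \<omega>)^2) = Cf a \<sigma> t t"
    "integrable P (\<lambda>\<omega>. (X t \<omega>)^4)" "prob_space.expectation P (\<lambda>\<omega>. (X t \<omega>)^4) = 3 * (Cf a \<sigma> t t)^2"
proof -
  interpret prob_space P using W by (simp add: wiener_process_def)
  have Xm[measurable]: "\<And>t. X t \<in> borel_measurable P" using X by (simp add: langevin_solution_def)
  have "(integrable P (\<lambda>\<omega>. (X t \<omega>)^2) \<and> expectation (\<lambda>\<omega>. (X t \<omega>)^2) = Cf a \<sigma> t t) \<and>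
    (integrable P (\<lambda>\<omega>. (X t \<omega>)^4) \<and> expectation (\<lambda>\<omega>. (X t \<omega>)^4) = 3 * (Cf a \<sigma> t t)^2)"
  proof (cases "t = 0")
    case True
    have e: "AE \<omega> in P. (X t \<omega>)^k = 0" if "k > 0" for k :: nat
      using X0[OF W X] True that by (intro AE_I2) simp
    have z: "integral\<^sup>L P (\<lambda>\<omega>. (X t \<omega>)^k) = 0" if "k > 0" for k :: nat
      using integral_cong_AE[of "\<lambda>\<omega>. (X t \<omega>)^k" P "\<lambda>_. 0"] e[OF that] by simp
    have i: "integrable P (\<lambda>\<omega>. (X t \<omega>)^k)" if "k > 0" for k :: nat
      using integrable_cong_AE[of "\<lambda>\<omega>. (X t \<omega>)^k" P "\<lambda>_. 0"] e[OF that] by simp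
    have "Cf a \<sigma> t t = 0" using True by (simp add: Cf_def)
    then show ?thesis using z[of 2] i[of 2] z[of 4] i[of 4] by simp
  next
    case False
    then have tp: "t > 0" using t by simp
    define Q where "Q = \<sigma>^2 * (0^2*(exp(2*a*(real 1*t)) - 1) + 2*0*1*exp(a*((real 1 - real 1)*t))*(exp(2*a*(real 1*t)) - 1) + 1^2*(exp(2*a*(real 1*t)) - 1))"
    have Qv: "Q/(2*a) = Cf a \<sigma> t t" by (simp add: Q_def Cf_def)
    have Cpos: "Cf a \<sigma> t t > 0"
    proof -
      have "exp (2*a*t) < 1" using a tp by (simp add: mult_neg_pos)
      then have "\<sigma>^2 * (exp (a*(t+t)) - 1) < 0" using s by (simp add: mult_pos_neg algebra_simps)
      then show ?thesis unfolding Cf_def using a by (simp add: divide_neg_neg)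
    qed
    have "distr P borel (\<lambda>\<omega>. (0 * X (real 1*t) \<omega> + 1 * X (real 1 * t) \<omega>) / sqrt (Q/(2*a))) = std_normal_distribution"
      by (rule gauss_pair[OF W X a s tp order_refl Q_def]) (use Cpos Qv in simp)
    then have d: "distr P borel (\<lambda>\<omega>. X t \<omega> / sqrt (Cf a \<sigma> t t)) = std_normal_distribution"
      unfolding Qv by simp
    show ?thesis using gauss_moments[OF Xm d Cpos] by simp
  qed
  then show "integrable P (\<lambda>\<omega>. (X t \<omega>)^2)" "expectation (\<lambda>\<omega>. (X t \<omega>)^2) = Cf a \<sigma> t t"
    "integrable P (\<lambda>\<omega>. (X t \<omega>)^4)" "expectation (\<lambda>\<omega>. (X t \<omega>)^4) = 3 * (Cf a \<sigma> t t)^2" by auto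
qed

lemma Qneg:
  fixes p q :: real assumes "0 < p" "p < 1" "0 < q" "q < 1"
  shows "(p^2 - 1) + 2*q*(p^2-1) + (p^2*q^2 - 1) < 0" "(p^2 - 1) - 2*q*(p^2-1) + (p^2*q^2 - 1) < 0"
proof -
  have p2: "p^2 < 1" using assms by (simp add: power_less_one_iff)
  have q2: "q^2 < 1" using assms by (simp add: power_less_one_iff)
  have "p^2*q^2 < 1*1" by (rule mult_strict_mono[OF p2 q2]) auto
  then have pq: "p^2*q^2 < 1" by simp
  have "2*q*(p^2-1) < 0" using p2 assms by (simp add: mult_pos_neg)
  then show "(p^2 - 1) + 2*q*(p^2-1) + (p^2*q^2 - 1) < 0" using p2 pq by linarith
  have "(p^2 - 1) - 2*q*(p^2-1) + (p^2*q^2 - 1) = (1-q)*(p^2*(1-q) - 2)" by (simp add: algebra_simps power2_eq_square)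
  moreover have "p^2*(1-q) \<le> p^2" using assms by (simp add: mult_left_le)
  moreover have "p^2*(1-q) < 2" using calculation(2) p2 by linarith
  ultimately show "(p^2 - 1) - 2*q*(p^2-1) + (p^2*q^2 - 1) < 0" using assms by (simp add: mult_pos_neg)
qed

lemma polar: "(3*((A::real)+2*C+B)^2 + 3*(A-2*C+B)^2 - 2*(3*A^2) - 2*(3*B^2))/12 = A*B + 2*C^2"
  by (simp add: power2_eq_square field_simps)

lemma polar_pt: "(x::real)^2 * y^2 = ((1*x + 1*y)^4 + (1*x + (-1)*y)^4 - 2*x^4 - 2*y^4)/12"
  by (simp add: power2_eq_square field_simps power4_eq_xxxx)

lemma moment_pair_le:
  fixes P :: "'a measure" and W X :: "real \<Rightarrow> 'a \<Rightarrow> real"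
  assumes W: "wiener_process P W" and X: "langevin_solution P a \<sigma> W X"
    and a: "a < 0" and s: "\<sigma> > 0" and h: "h > 0" and jk: "j \<le> k"
  shows "integrable P (\<lambda>\<omega>. (X (real j*h) \<omega>)^2 * (X (real k*h) \<omega>)^2) \<and>
    prob_space.expectation P (\<lambda>\<omega>. (X (real j*h) \<omega>)^2 * (X (real k*h) \<omega>)^2)
      = Cf a \<sigma> (real j*h) (real j*h) * Cf a \<sigma> (real k*h) (real k*h) + 2 * (Cf a \<sigma> (real j*h) (real k*h))^2"
proof -
  interpret prob_space P using W by (simp add: wiener_process_def)
  have Xm[measurable]: "\<And>t. X t \<in> borel_measurable P" using X by (simp add: langevin_solution_def)
  consider "j = 0" | "j = k" "j > 0" | "0 < j" "j < k" using jk by linarith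
  then show ?thesis
  proof cases
    case 1
    have e: "AE \<omega> in P. (X (real j*h) \<omega>)^2 * (X (real k*h) \<omega>)^2 = 0"
      using X0[OF W X] 1 by (intro AE_I2) simp
    have mm: "(\<lambda>\<omega>. (X (real j*h) \<omega>)^2 * (X (real k*h) \<omega>)^2) \<in> borel_measurable P" by measurable
    have z: "expectation (\<lambda>\<omega>. (X (real j*h) \<omega>)^2 * (X (real k*h) \<omega>)^2) = 0"
      using integral_cong_AE[OF mm _ e] by simp
    have i: "integrable P (\<lambda>\<omega>. (X (real j*h) \<omega>)^2 * (X (real k*h) \<omega>)^2)"
      using integrable_cong_AE[OF mm _ e] by simp
    have "Cf a \<sigma> (real j*h) (real j*h) = 0" "Cf a \<sigma> (real j*h) (real k*h) = 0"
      using 1 h by (simp_all add: Cf_def)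
    then show ?thesis using z i by simp
  next
    case 2
    have eq: "(X (real j*h) \<omega>)^2 * (X (real k*h) \<omega>)^2 = (X (real k*h) \<omega>)^4" for \<omega>
      using 2 by (simp add: power2_eq_square power4_eq_xxxx)
    have t0: "real k * h \<ge> 0" using h by simp
    show ?thesis unfolding eq using moment_single[OF W X a s t0] 2 by (simp add: power2_eq_square)
  next
    case 3
    define p where "p = exp (a * (real j * h))"
    define q where "q = exp (a * ((real k - real j) * h))"
    have p: "0 < p" "p < 1" unfolding p_def using 3 h a by (auto simp: mult_neg_pos)
    have q: "0 < q" "q < 1" unfolding q_def using 3 h a by (auto simp: mult_neg_pos)
    have e1: "exp (2*a*(real j*h)) = p^2" unfolding p_def exp_pow by (simp add: algebra_simps)
    have e3: "exp (2*a*(real k*h)) = p^2*q^2"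
      unfolding p_def q_def exp_pow by (simp add: exp_add[symmetric] algebra_simps)
    have Cs: "Cf a \<sigma> (real j*h) (real j*h) = \<sigma>^2 * (p^2 - 1) / (2*a)"
      unfolding Cf_def e1[symmetric] by (simp add: algebra_simps)
    have Ct: "Cf a \<sigma> (real k*h) (real k*h) = \<sigma>^2 * (p^2*q^2 - 1) / (2*a)"
      unfolding Cf_def e3[symmetric] by (simp add: algebra_simps)
    have C: "Cf a \<sigma> (real j*h) (real k*h) = \<sigma>^2 * (p^2*q - q) / (2*a)"
    proof -
      have "\<bar>real k * h - real j * h\<bar> = (real k - real j) * h" using 3 h by (simp add: algebra_simps)
      moreover have "exp (a * (real j * h + real k * h)) = p^2 * q"
        unfolding p_def q_def exp_pow by (simp add: exp_add[symmetric] algebra_simps)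
      ultimately show ?thesis unfolding Cf_def q_def by simp
    qed
    define Qp where "Qp = \<sigma>^2 * (1^2*(exp(2*a*(real j*h)) - 1) + 2*1*1*exp(a*((real k - real j)*h))*(exp(2*a*(real j*h)) - 1) + 1^2*(exp(2*a*(real k*h)) - 1))"
    define Qm where "Qm = \<sigma>^2 * (1^2*(exp(2*a*(real j*h)) - 1) + 2*1*(-1)*exp(a*((real k - real j)*h))*(exp(2*a*(real j*h)) - 1) + (-1)^2*(exp(2*a*(real k*h)) - 1))"
    have Qp': "Qp = \<sigma>^2 * ((p^2 - 1) + 2*q*(p^2-1) + (p^2*q^2 - 1))"
      unfolding Qp_def e1 e3 q_def[symmetric] by simp
    have Qm': "Qm = \<sigma>^2 * ((p^2 - 1) - 2*q*(p^2-1) + (p^2*q^2 - 1))"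
      unfolding Qm_def e1 e3 q_def[symmetric] by simp
    have Qpn: "Qp < 0" unfolding Qp' using Qneg(1)[OF p q] s by (simp add: mult_pos_neg)
    have Qmn: "Qm < 0" unfolding Qm' using Qneg(2)[OF p q] s by (simp add: mult_pos_neg)
    have Qpv: "Qp/(2*a) = Cf a \<sigma> (real j*h) (real j*h) + 2 * Cf a \<sigma> (real j*h) (real k*h) + Cf a \<sigma> (real k*h) (real k*h)"
      unfolding Qp' Cs Ct C using a by (simp add: field_simps)
    have Qmv: "Qm/(2*a) = Cf a \<sigma> (real j*h) (real j*h) - 2 * Cf a \<sigma> (real j*h) (real k*h) + Cf a \<sigma> (real k*h) (real k*h)"
      unfolding Qm' Cs Ct C using a by (simp add: field_simps)
    have Qpp: "Qp/(2*a) > 0" using Qpn a by (simp add: divide_neg_neg)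
    have Qmp: "Qm/(2*a) > 0" using Qmn a by (simp add: divide_neg_neg)
    have jkl: "j \<le> k" using 3 by simp
    have dp: "distr P borel (\<lambda>\<omega>. (1 * X (real j*h) \<omega> + 1 * X (real k * h) \<omega>) / sqrt (Qp/(2*a))) = std_normal_distribution"
      by (rule gauss_pair[OF W X a s h jkl Qp_def Qpp])
    have dm: "distr P borel (\<lambda>\<omega>. (1 * X (real j*h) \<omega> + (-1) * X (real k * h) \<omega>) / sqrt (Qm/(2*a))) = std_normal_distribution"
      by (rule gauss_pair[OF W X a s h jkl Qm_def Qmp])
    note mp = gauss_moments[OF _ dp Qpp]
    note mm = gauss_moments[OF _ dm Qmp]
    have t0: "real j * h \<ge> 0" "real k * h \<ge> 0" using h by simp_all
    note m1 = moment_single[OF W X a s t0(1)]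
    note m2 = moment_single[OF W X a s t0(2)]
    have int: "integrable P (\<lambda>\<omega>. ((1 * X (real j*h) \<omega> + 1 * X (real k * h) \<omega>)^4 + (1 * X (real j*h) \<omega> + (-1) * X (real k * h) \<omega>)^4
        - 2 * (X (real j*h) \<omega>)^4 - 2 * (X (real k*h) \<omega>)^4) / 12)"
      using mp(3) mm(3) m1(3) m2(3) by (intro integrable_divide integrable_diff integrable_add integrable_mult_right) auto
    have "expectation (\<lambda>\<omega>. ((1 * X (real j*h) \<omega> + 1 * X (real k * h) \<omega>)^4 + (1 * X (real j*h) \<omega> + (-1) * X (real k * h) \<omega>)^4
        - 2 * (X (real j*h) \<omega>)^4 - 2 * (X (real k*h) \<omega>)^4) / 12)
      = (3 * (Qp/(2*a))^2 + 3 * (Qm/(2*a))^2 - 2 * (3 * (Cf a \<sigma> (real j*h) (real j*h))^2) - 2 * (3 * (Cf a \<sigma> (real k*h) (real k*h))^2)) / 12"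
      using mp(3,4) mm(3,4) m1(3,4) m2(3,4) by (simp add: integral_diff integral_add integrable_diff integrable_add)
    also have "\<dots> = Cf a \<sigma> (real j*h) (real j*h) * Cf a \<sigma> (real k*h) (real k*h) + 2 * (Cf a \<sigma> (real j*h) (real k*h))^2"
      unfolding Qpv Qmv by (rule polar)
    finally show ?thesis using int unfolding polar_pt[symmetric] by simp
  qed
qed

lemma moment_pair:
  fixes P :: "'a measure" and W X :: "real \<Rightarrow> 'a \<Rightarrow> real"
  assumes W: "wiener_process P W" and X: "langevin_solution P a \<sigma> W X"
    and a: "a < 0" and s: "\<sigma> > 0" and h: "h > 0"
  shows "integrable P (\<lambda>\<omega>. (X (real j*h) \<omega>)^2 * (X (real k*h) \<omega>)^2) \<and>
    prob_space.expectation P (\<lambda>\<omega>. (X (real j*h) \<omega>)^2 * (X (real k*h) \<omega>)^2)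
      = Cf a \<sigma> (real j*h) (real j*h) * Cf a \<sigma> (real k*h) (real k*h) + 2 * (Cf a \<sigma> (real j*h) (real k*h))^2"
proof (cases "j \<le> k")
  case True
  then show ?thesis using moment_pair_le[OF W X a s h] by blast
next
  case False
  then have "k \<le> j" by simp
  have e: "(\<lambda>\<omega>. (X (real j*h) \<omega>)^2 * (X (real k*h) \<omega>)^2) = (\<lambda>\<omega>. (X (real k*h) \<omega>)^2 * (X (real j*h) \<omega>)^2)"
    by (simp add: mult.commute)
  have c: "Cf a \<sigma> (real k*h) (real j*h) = Cf a \<sigma> (real j*h) (real k*h)" by (rule Cf_sym)
  from moment_pair_le[OF W X a s h \<open>k \<le> j\<close>] show ?thesis
    unfolding e c by (simp add: mult.commute)
qed

lemma geo: "((x::real)-1) * (\<Sum>k<N. x^k) = x^N - 1"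
  by (induct N) (simp_all add: algebra_simps)

definition gg :: "real \<Rightarrow> nat \<Rightarrow> nat \<Rightarrow> real" where
  "gg \<rho> k l = (\<rho>^(k+l) - \<rho>^(if k \<le> l then l-k else k-l))^2"

lemma gg_sym: "gg \<rho> k l = gg \<rho> l k" by (auto simp: gg_def add.commute)

lemma gg_col: "(\<Sum>k<N. gg \<rho> k N) = (\<rho>^2)^N * (\<Sum>k<N. (\<rho>^2)^k) - 2 * real N * (\<rho>^2)^N + \<rho>^2 * (\<Sum>k<N. (\<rho>^2)^k)"
proof -
  have pt: "gg \<rho> k N = (\<rho>^2)^N * (\<rho>^2)^k - 2 * (\<rho>^2)^N + (\<rho>^2)^(N-k)" if "k < N" for k
  proof -
    have "\<rho>^(k+N) * \<rho>^(N-k) = (\<rho>^2)^N" using that by (simp add: power_add[symmetric] power_mult[symmetric] mult_2)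
    moreover have "(\<rho>^(k+N))^2 = (\<rho>^2)^N * (\<rho>^2)^k" by (simp add: power_mult[symmetric] power_add[symmetric] algebra_simps)
    moreover have "(\<rho>^(N-k))^2 = (\<rho>^2)^(N-k)" by (simp add: power_mult[symmetric] algebra_simps)
    ultimately show ?thesis using that unfolding gg_def by (simp add: power2_diff)
  qed
  have r: "(\<Sum>k<N. (\<rho>^2)^(N-k)) = \<rho>^2 * (\<Sum>k<N. (\<rho>^2)^k)"
  proof -
    have "(\<Sum>k<N. (\<rho>^2)^(N-k)) = (\<Sum>k<N. (\<rho>^2)^(Suc (N - Suc k)))"
      by (rule sum.cong) (auto simp del: power_Suc simp add: Suc_diff_Suc)
    also have "\<dots> = (\<Sum>k<N. (\<rho>^2)^(Suc k))"
      using sum.nat_diff_reindex[of "\<lambda>i. (\<rho>^2)^(Suc i)" N] by simp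
    finally show ?thesis by (simp add: sum_distrib_left)
  qed
  have "(\<Sum>k<N. gg \<rho> k N) = (\<Sum>k<N. (\<rho>^2)^N * (\<rho>^2)^k - 2 * (\<rho>^2)^N + (\<rho>^2)^(N-k))"
    by (rule sum.cong) (auto simp: pt)
  also have "\<dots> = (\<rho>^2)^N * (\<Sum>k<N. (\<rho>^2)^k) - 2 * real N * (\<rho>^2)^N + (\<Sum>k<N. (\<rho>^2)^(N-k))"
    by (simp add: sum.distrib sum_subtractf sum_distrib_left)
  finally show ?thesis unfolding r .
qed

lemma F_step_alg:
  fixes x X G FN :: real and N :: nat
  assumes G: "(x-1)*G = X - 1"
    and IH: "(x-1)^2 * FN = (X - 1)*(4*x + X + 1) - (x-1)*(x + 4*X + 1)*real N"
  shows "(x-1)^2 * (FN + 2*(X*G - 2*real N*X + x*G) + (X-1)^2)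
    = (x*X - 1)*(4*x + x*X + 1) - (x-1)*(x + 4*(x*X) + 1)*(real N + 1)"
proof -
  have "(x-1)^2 * (FN + 2*(X*G - 2*real N*X + x*G) + (X-1)^2)
     = (x-1)^2 * FN + 2*(x-1)*X*((x-1)*G) + 2*(x-1)*x*((x-1)*G) - 4*real N*X*(x-1)^2 + (x-1)^2*(X-1)^2"
    by (simp add: algebra_simps power2_eq_square)
  also have "\<dots> = (X - 1)*(4*x + X + 1) - (x-1)*(x + 4*X + 1)*real N + 2*(x-1)*X*(X-1) + 2*(x-1)*x*(X-1) - 4*real N*X*(x-1)^2 + (x-1)^2*(X-1)^2"
    unfolding G IH ..
  also have "\<dots> = (x*X - 1)*(4*x + x*X + 1) - (x-1)*(x + 4*(x*X) + 1)*(real N + 1)"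
    by (simp add: algebra_simps power2_eq_square)
  finally show ?thesis .
qed

lemma F_closed:
  "(\<rho>^2-1)^2 * (\<Sum>k<N. \<Sum>l<N. gg \<rho> k l)
    = ((\<rho>^2)^N - 1)*(4*\<rho>^2 + (\<rho>^2)^N + 1) - (\<rho>^2-1)*(\<rho>^2 + 4*(\<rho>^2)^N + 1)*real N"
proof (induction N)
  case 0
  then show ?case by simp
next
  case (Suc N)
  have gNN: "gg \<rho> N N = ((\<rho>^2)^N - 1)^2" by (simp add: gg_def power_mult[symmetric] mult_2)
  have "(\<Sum>k<Suc N. \<Sum>l<Suc N. gg \<rho> k l) = (\<Sum>k<N. \<Sum>l<N. gg \<rho> k l) + (\<Sum>k<N. gg \<rho> k N) + (\<Sum>l<N. gg \<rho> N l) + gg \<rho> N N"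
    by (simp add: sum.distrib)
  also have "(\<Sum>l<N. gg \<rho> N l) = (\<Sum>k<N. gg \<rho> k N)" by (rule sum.cong) (auto simp: gg_sym)
  finally have e: "(\<Sum>k<Suc N. \<Sum>l<Suc N. gg \<rho> k l) = (\<Sum>k<N. \<Sum>l<N. gg \<rho> k l)
      + 2*((\<rho>^2)^N * (\<Sum>k<N. (\<rho>^2)^k) - 2 * real N * (\<rho>^2)^N + \<rho>^2 * (\<Sum>k<N. (\<rho>^2)^k)) + ((\<rho>^2)^N - 1)^2"
    unfolding gg_col gNN by simp
  show ?case unfolding e
    using F_step_alg[OF geo[of "\<rho>^2" N] Suc.IH] by (simp add: mult.assoc)
qed

definition Gf :: "real \<Rightarrow> real \<Rightarrow> real \<Rightarrow> nat \<Rightarrow> (real \<Rightarrow> real) \<Rightarrow> real" where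
  "Gf a \<sigma> h k f = lim (\<lambda>n. Zs a \<sigma> f (h / real (Suc n)) (k * Suc n))"

lemma Zs_meas: "(\<lambda>f. Zs a \<sigma> f \<epsilon> L) \<in> borel_measurable (Pi\<^sub>M UNIV (\<lambda>_::real. borel))"
  unfolding Zs_def by measurable

lemma Gf_meas: "Gf a \<sigma> h k \<in> borel_measurable (Pi\<^sub>M UNIV (\<lambda>_::real. borel))"
proof -
  have "(\<lambda>f. lim (\<lambda>n. Zs a \<sigma> f (h / real (Suc n)) (k * Suc n))) \<in> borel_measurable (Pi\<^sub>M UNIV (\<lambda>_::real. borel))"
    by (rule borel_measurable_lim_metric) (rule Zs_meas)
  then show ?thesis unfolding Gf_def[abs_def] .
qed

lemma Gf_eq:
  assumes W: "wiener_process P W" and X: "langevin_solution P a \<sigma> W X"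
    and a: "a < 0" and s: "\<sigma> > 0" and h: "h > 0" and \<omega>: "\<omega> \<in> space P"
  shows "Gf a \<sigma> h k (\<lambda>t. W t \<omega>) = X (real k * h) \<omega>"
proof -
  have w0: "W 0 \<omega> = 0" and cw: "continuous_on {0..} (\<lambda>t. W t \<omega>)"
    using W \<omega> by (auto simp: wiener_process_def)
  have cx: "continuous_on {0..} (\<lambda>t. X t \<omega>)"
    and eqx: "\<And>t. t \<ge> 0 \<Longrightarrow> X t \<omega> = integral {0..t} (\<lambda>s. a * X s \<omega>) + \<sigma> * W t \<omega>"
    using X \<omega> by (auto simp: langevin_solution_def)
  have "(\<lambda>n. Zs a \<sigma> (\<lambda>t. W t \<omega>) (h / real (Suc n)) (k * Suc n)) \<longlonglongrightarrow> X (real k * h) \<omega>"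
    using Zs_converges[OF _ s h w0 cw cx eqx] a by simp
  then show ?thesis unfolding Gf_def by (rule limI)
qed

lemma episode:
  fixes P :: "'a measure" and W X :: "real \<Rightarrow> 'a \<Rightarrow> real"
  assumes W: "wiener_process P W" and X: "langevin_solution P a \<sigma> W X"
    and a: "a < 0" and s: "\<sigma> > 0" and h: "h > 0"
  shows "integrable P (\<lambda>\<omega>. \<Sum>k<N. h * (X (real k*h) \<omega>)^2)"
    "prob_space.expectation P (\<lambda>\<omega>. \<Sum>k<N. h * (X (real k*h) \<omega>)^2) = (\<Sum>k<N. h * Cf a \<sigma> (real k*h) (real k*h))"
    "integrable P (\<lambda>\<omega>. (\<Sum>k<N. h * (X (real k*h) \<omega>)^2)^2)"
    "prob_space.expectation P (\<lambda>\<omega>. (\<Sum>k<N. h * (X (real k*h) \<omega>)^2)^2)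
       = (\<Sum>k<N. \<Sum>l<N. h^2 * (Cf a \<sigma> (real k*h) (real k*h) * Cf a \<sigma> (real l*h) (real l*h) + 2 * (Cf a \<sigma> (real k*h) (real l*h))^2))"
proof -
  interpret prob_space P using W by (simp add: wiener_process_def)
  have t0: "real k * h \<ge> 0" for k using h by simp
  note ms = moment_single[OF W X a s t0]
  note mp = moment_pair[OF W X a s h]
  show "integrable P (\<lambda>\<omega>. \<Sum>k<N. h * (X (real k*h) \<omega>)^2)"
    by (intro Bochner_Integration.integrable_sum integrable_mult_right) (use ms in auto)
  show "expectation (\<lambda>\<omega>. \<Sum>k<N. h * (X (real k*h) \<omega>)^2) = (\<Sum>k<N. h * Cf a \<sigma> (real k*h) (real k*h))"
    by (subst Bochner_Integration.integral_sum) (use ms in auto)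
  have sq: "(\<Sum>k<N. h * (X (real k*h) \<omega>)^2)^2 = (\<Sum>k<N. \<Sum>l<N. h^2 * ((X (real k*h) \<omega>)^2 * (X (real l*h) \<omega>)^2))" for \<omega>
    by (simp add: power2_eq_square sum_product algebra_simps)
  show "integrable P (\<lambda>\<omega>. (\<Sum>k<N. h * (X (real k*h) \<omega>)^2)^2)"
    unfolding sq by (intro Bochner_Integration.integrable_sum integrable_mult_right) (use mp in auto)
  show "expectation (\<lambda>\<omega>. (\<Sum>k<N. h * (X (real k*h) \<omega>)^2)^2)
       = (\<Sum>k<N. \<Sum>l<N. h^2 * (Cf a \<sigma> (real k*h) (real k*h) * Cf a \<sigma> (real l*h) (real l*h) + 2 * (Cf a \<sigma> (real k*h) (real l*h))^2))"
    unfolding sq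
  proof (subst Bochner_Integration.integral_sum)
    show "\<And>k. k \<in> {..<N} \<Longrightarrow> integrable P (\<lambda>\<omega>. \<Sum>l<N. h\<^sup>2 * ((X (real k * h) \<omega>)\<^sup>2 * (X (real l * h) \<omega>)\<^sup>2))"
      by (intro Bochner_Integration.integrable_sum integrable_mult_right) (use mp in auto)
    show "(\<Sum>k<N. expectation (\<lambda>\<omega>. \<Sum>l<N. h\<^sup>2 * ((X (real k * h) \<omega>)\<^sup>2 * (X (real l * h) \<omega>)\<^sup>2))) =
      (\<Sum>k<N. \<Sum>l<N. h\<^sup>2 * (Cf a \<sigma> (real k * h) (real k * h) * Cf a \<sigma> (real l * h) (real l * h) + 2 * (Cf a \<sigma> (real k * h) (real l * h))\<^sup>2))"
    proof (rule sum.cong[OF refl])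
      fix k assume "k \<in> {..<N}"
      show "expectation (\<lambda>\<omega>. \<Sum>l<N. h\<^sup>2 * ((X (real k * h) \<omega>)\<^sup>2 * (X (real l * h) \<omega>)\<^sup>2)) =
        (\<Sum>l<N. h\<^sup>2 * (Cf a \<sigma> (real k * h) (real k * h) * Cf a \<sigma> (real l * h) (real l * h) + 2 * (Cf a \<sigma> (real k * h) (real l * h))\<^sup>2))"
        by (subst Bochner_Integration.integral_sum) (use mp in auto)
    qed
  qed
qed

lemma final_alg:
  fixes a h T x R G F \<sigma> :: real and N M :: nat
  assumes a: "a < 0" and h: "h > 0" and N: "N > 0" and M: "M > 0"
    and T: "T = real N * h" and x: "x = exp (2*a*h)" and R: "R = exp (2*a*T)"
    and G: "(x-1)*G = R - 1"
    and F: "(x-1)^2*F = (R-1)*(4*x+R+1) - (x-1)*(x+4*R+1)*real N"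
  shows "(h*\<sigma>^2/(2*a)*(G - real N) - \<sigma>^2/(2*a)*((R-1)/(2*a) - T))^2 + (2*h^2*(\<sigma>^4/(4*a^2))*F)/real M
    = E1 \<sigma> h T a + E2 \<sigma> h T a / (real M * real N)"
proof -
  have x1: "x < 1" unfolding x using a h by (simp add: mult_neg_pos)
  then have xn: "x - 1 \<noteq> 0" by simp
  have an: "a \<noteq> 0" using a by simp
  have Nn: "real N \<noteq> 0" and Mn: "real M \<noteq> 0" using N M by auto
  have G': "G = (R-1)/(x-1)" using G xn by (simp add: field_simps)
  have F': "F = ((R-1)*(4*x+R+1) - (x-1)*(x+4*R+1)*real N)/(x-1)^2" using F xn by (simp add: field_simps)
  have d1: "h*\<sigma>^2/(2*a)*(G - real N) - \<sigma>^2/(2*a)*((R-1)/(2*a) - T) = \<sigma>^2*(R-1)*(2*a*h - x + 1)/(4*a^2*(x-1))"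
    unfolding G' T using xn an by (simp add: field_simps power2_eq_square)
  have p1: "(h*\<sigma>^2/(2*a)*(G - real N) - \<sigma>^2/(2*a)*((R-1)/(2*a) - T))^2 = E1 \<sigma> h T a"
    unfolding d1 E1_def x[symmetric] R[symmetric] using xn an
    by (simp add: field_simps power2_eq_square power4_eq_xxxx)
  define K where "K = (R-1)*(4*x+R+1) - (x-1)*(x+4*R+1)*real N"
  have num: "\<sigma>^4 * T * (h * (R - 1) * (4 * x + R + 1) - (x - 1) * (x + 4 * R + 1) * T) = real N * (\<sigma>^4*h^2*K)"
    unfolding K_def T by (simp add: algebra_simps power2_eq_square)
  have E2': "E2 \<sigma> h T a = real N * (\<sigma>^4*h^2*K) / (2 * a^2 * (x - 1)^2)"
    unfolding E2_def x[symmetric] R[symmetric] num ..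
  have x2: "(x-1)^2 \<noteq> 0" using xn by simp
  have p2: "(2*h^2*(\<sigma>^4/(4*a^2))*F)/real M = E2 \<sigma> h T a / (real M * real N)"
    unfolding E2' F' K_def[symmetric] using x2 an Nn Mn by (simp add: field_simps)
  show ?thesis using p1 p2 by simp
qed

lemma Cf_gg:
  assumes h: "h > 0"
  shows "Cf a \<sigma> (real k*h) (real l*h) = \<sigma>^2 * (exp (a*h)^(k+l) - exp (a*h)^(if k \<le> l then l-k else k-l)) / (2*a)"
proof -
  have e1: "exp (a*(real k*h + real l*h)) = exp (a*h)^(k+l)" unfolding exp_pow by (simp add: algebra_simps)
  have e2: "exp (a*\<bar>real l*h - real k*h\<bar>) = exp (a*h)^(if k \<le> l then l-k else k-l)"
  proof (cases "k \<le> l")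
    case True
    then have "\<bar>real l*h - real k*h\<bar> = real (l-k) * h" using h by (simp add: of_nat_diff algebra_simps)
    then show ?thesis using True unfolding exp_pow by (simp add: algebra_simps)
  next
    case False
    then have "\<bar>real l*h - real k*h\<bar> = real (k-l) * h" using h by (simp add: of_nat_diff algebra_simps)
    then show ?thesis using False unfolding exp_pow by (simp add: algebra_simps)
  qed
  show ?thesis unfolding Cf_def e1 e2 ..
qed

lemma Cf_diag:
  assumes h: "h > 0"
  shows "Cf a \<sigma> (real k*h) (real k*h) = \<sigma>^2 * (exp (2*a*h)^k - 1) / (2*a)"
proof -
  have "exp (a*h)^(k+k) = exp (2*a*h)^k" unfolding exp_pow by (simp add: algebra_simps)
  then show ?thesis using Cf_gg[OF h, of a \<sigma> k k] by simp
qed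

lemma Cf_sq_gg:
  assumes h: "h > 0"
  shows "(Cf a \<sigma> (real k*h) (real l*h))^2 = \<sigma>^4/(4*a^2) * gg (exp (a*h)) k l"
  unfolding Cf_gg[OF h] gg_def by (simp add: power_divide power_mult_distrib)

lemma sum_ite_const:
  fixes c d :: real
  assumes "finite A" "i \<in> A"
  shows "(\<Sum>j\<in>A. if i = j then d else c) = d + (real (card A) - 1) * c"
proof -
  have "(\<Sum>j\<in>A. if i = j then d else c) = d + (\<Sum>j\<in>A - {i}. if i = j then d else c)"
    using sum.remove[OF assms, of "\<lambda>j. if i = j then d else c"] by simp
  also have "(\<Sum>j\<in>A - {i}. if i = j then d else c) = (\<Sum>j\<in>A - {i}. c)" by (rule sum.cong) auto
  also have "\<dots> = (real (card A) - 1) * c" using assms by (simp add: card_Diff_singleton of_nat_diff card_gt_0_iff[symmetric]) (metis One_nat_def Suc_leI card_gt_0_iff empty_iff of_nat_1 of_nat_diff)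
  finally show ?thesis .
qed

lemma V_integral:
  fixes a \<sigma> T :: real assumes a: "a < 0" and T: "T > 0"
  shows "integral {0..T} (\<lambda>t. \<sigma>^2 * (exp (2*a*t) - 1) / (2*a)) = \<sigma>^2/(2*a)*((exp (2*a*T)-1)/(2*a) - T)"
proof -
  define F where "F t = \<sigma>^2 * (exp (2*a*t)/(2*a) - t) / (2*a)" for t
  have "((\<lambda>t. \<sigma>^2 * (exp (2*a*t) - 1) / (2*a)) has_integral (F T - F 0)) {0..T}"
  proof (rule fundamental_theorem_of_calculus)
    show "0 \<le> T" using T by simp
    fix t :: real assume "t \<in> {0..T}"
    have "(F has_real_derivative \<sigma>^2 * (exp (2*a*t) * (2*a) / (2*a) - 1) / (2*a)) (at t within {0..T})"
      unfolding F_def by (auto intro!: derivative_eq_intros)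
    then show "(F has_vector_derivative \<sigma>^2 * (exp (2*a*t) - 1) / (2*a)) (at t within {0..T})"
      using a by (simp add: has_real_derivative_iff_has_vector_derivative)
  qed
  then have "integral {0..T} (\<lambda>t. \<sigma>^2 * (exp (2*a*t) - 1) / (2*a)) = F T - F 0" by (rule integral_unique)
  also have "\<dots> = \<sigma>^2/(2*a)*((exp (2*a*T)-1)/(2*a) - T)" unfolding F_def using a by (simp add: field_simps)
  finally show ?thesis .
qed

lemma sum_c: "(\<Sum>k<N. (c::real) * (f k - 1)) = c * ((\<Sum>k<N. f k) - real N)"
  by (simp add: sum_distrib_left[symmetric] sum_subtractf)

theorem theorem3p1:
  fixes P :: "'a measure"
    and a \<sigma> T h :: real
    and N M B :: nat
    and w x :: "real \<Rightarrow> 'a \<Rightarrow> real"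
    and ws xs :: "nat \<Rightarrow> real \<Rightarrow> 'a \<Rightarrow> real"
  assumes "a < 0" and "\<sigma> > 0" and "T > 0" and "h > 0"
    and "N > 0" and "real N = T / h"
    and "M \<ge> 1" and "B = M * N"
    and "wiener_process P w" and "langevin_solution P a \<sigma> w x"
    and "\<forall>i\<in>{1..M}. wiener_process P (ws i)"
    and "prob_space.indep_vars P (\<lambda>_. Pi\<^sub>M UNIV (\<lambda>_::real. borel))
           (\<lambda>i \<omega>. (\<lambda>t. ws i t \<omega>)) {1..M}"
    and "\<forall>i\<in>{1..M}. langevin_solution P a \<sigma> (ws i) (xs i)"
  shows "prob_space.expectation P
           (\<lambda>\<omega>. ((1 / real M) * (\<Sum>i=1..M. \<Sum>k<N. h * (xs i (real k * h) \<omega>)^2)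
                 - integral {0..T} (\<lambda>t. prob_space.expectation P (\<lambda>\<eta>. (x t \<eta>)^2)))^2)
         = E1 \<sigma> h T a + E2 \<sigma> h T a / real B"
proof -
  note a = assms(1) and s = assms(2) and Tp = assms(3) and h = assms(4) and Np = assms(5)
  interpret prob_space P using assms(9) by (simp add: wiener_process_def)
  have Wi: "wiener_process P (ws i)" and Xi: "langevin_solution P a \<sigma> (ws i) (xs i)" if "i \<in> {1..M}" for i
    using assms(11,13) that by auto
  have TN: "T = real N * h" using assms(6) h by (simp add: field_simps)
  define H where "H f = (\<Sum>k<N. h * (Gf a \<sigma> h k f)^2)" for f
  note Gf_meas[measurable]
  have Hm: "H \<in> borel_measurable (Pi\<^sub>M UNIV (\<lambda>_::real. borel))"
    unfolding H_def[abs_def] by measurable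
  define S where "S i \<omega> = H (\<lambda>t. ws i t \<omega>)" for i \<omega>
  have Seq: "S i \<omega> = (\<Sum>k<N. h * (xs i (real k*h) \<omega>)^2)" if "i \<in> {1..M}" "\<omega> \<in> space P" for i \<omega>
    unfolding S_def H_def using Gf_eq[OF Wi[OF that(1)] Xi[OF that(1)] a s h that(2)] by simp
  define m1 where "m1 = (\<Sum>k<N. h * Cf a \<sigma> (real k*h) (real k*h))"
  define m2 where "m2 = (\<Sum>k<N. \<Sum>l<N. h^2 * (Cf a \<sigma> (real k*h) (real k*h) * Cf a \<sigma> (real l*h) (real l*h) + 2 * (Cf a \<sigma> (real k*h) (real l*h))^2))"
  have Si: "integrable P (S i) \<and> expectation (S i) = m1 \<and> integrable P (\<lambda>\<omega>. (S i \<omega>)^2) \<and> expectation (\<lambda>\<omega>. (S i \<omega>)^2) = m2"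
    if i: "i \<in> {1..M}" for i
  proof -
    note ep = episode[OF Wi[OF i] Xi[OF i] a s h, of N]
    have c1: "integrable P (S i) = integrable P (\<lambda>\<omega>. \<Sum>k<N. h * (xs i (real k*h) \<omega>)^2)"
      by (rule Bochner_Integration.integrable_cong) (auto simp: Seq[OF i])
    have c2: "expectation (S i) = expectation (\<lambda>\<omega>. \<Sum>k<N. h * (xs i (real k*h) \<omega>)^2)"
      by (rule Bochner_Integration.integral_cong) (auto simp: Seq[OF i])
    have c3: "integrable P (\<lambda>\<omega>. (S i \<omega>)^2) = integrable P (\<lambda>\<omega>. (\<Sum>k<N. h * (xs i (real k*h) \<omega>)^2)^2)"
      by (rule Bochner_Integration.integrable_cong) (auto simp: Seq[OF i])
    have c4: "expectation (\<lambda>\<omega>. (S i \<omega>)^2) = expectation (\<lambda>\<omega>. (\<Sum>k<N. h * (xs i (real k*h) \<omega>)^2)^2)"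
      by (rule Bochner_Integration.integral_cong) (auto simp: Seq[OF i])
    show ?thesis unfolding c1 c2 c3 c4 m1_def m2_def using ep by simp
  qed
  have ind: "indep_vars (\<lambda>_. borel) S {1..M}"
  proof -
    have "indep_vars (\<lambda>_. borel) (\<lambda>i \<omega>. H ((\<lambda>i \<omega>. (\<lambda>t. ws i t \<omega>)) i \<omega>)) {1..M}"
      by (rule indep_vars_compose2[OF assms(12)]) (use Hm in simp)
    then show ?thesis unfolding S_def by simp
  qed
  have pair: "integrable P (\<lambda>\<omega>. S i \<omega> * S j \<omega>) \<and> expectation (\<lambda>\<omega>. S i \<omega> * S j \<omega>) = (if i = j then m2 else m1^2)"
    if i: "i \<in> {1..M}" and j: "j \<in> {1..M}" for i j
  proof (cases "i = j")
    case True
    then show ?thesis using Si[OF i] by (simp add: power2_eq_square)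
  next
    case False
    have ind2: "indep_vars (\<lambda>_. borel) S {i, j}"
      by (rule indep_vars_subset[OF ind]) (use i j in auto)
    have int: "\<And>l. l \<in> {i,j} \<Longrightarrow> integrable P (S l)" using Si i j by auto
    have pr: "(\<Prod>l\<in>{i,j}. S l \<omega>) = S i \<omega> * S j \<omega>" for \<omega> using False by simp
    have "integrable P (\<lambda>\<omega>. \<Prod>l\<in>{i,j}. S l \<omega>)"
      by (rule indep_vars_integrable[OF _ ind2 int]) auto
    moreover have "expectation (\<lambda>\<omega>. \<Prod>l\<in>{i,j}. S l \<omega>) = (\<Prod>l\<in>{i,j}. expectation (S l))"
      by (rule indep_vars_lebesgue_integral[OF _ ind2 int]) auto
    ultimately show ?thesis using False Si[OF i] Si[OF j] unfolding pr by (simp add: power2_eq_square)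
  qed
  define V where "V = integral {0..T} (\<lambda>t. expectation (\<lambda>\<eta>. (x t \<eta>)^2))"
  have Mp: "real M > 0" using assms(7) by simp
  have cM: "card {1..M} = M" by simp
  have e0: "expectation (\<lambda>\<omega>. ((1 / real M) * (\<Sum>i=1..M. \<Sum>k<N. h * (xs i (real k * h) \<omega>)^2) - V)^2)
      = expectation (\<lambda>\<omega>. (1/(real M)^2) * (\<Sum>i\<in>{1..M}. \<Sum>j\<in>{1..M}. S i \<omega> * S j \<omega>) - (2*V/real M) * (\<Sum>i\<in>{1..M}. S i \<omega>) + V^2)"
  proof (rule Bochner_Integration.integral_cong[OF refl])
    fix \<omega> assume \<omega>: "\<omega> \<in> space P"
    have "(\<Sum>i=1..M. \<Sum>k<N. h * (xs i (real k * h) \<omega>)^2) = (\<Sum>i\<in>{1..M}. S i \<omega>)"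
      by (rule sum.cong) (auto simp: Seq \<omega>)
    moreover have "((1 / real M) * (\<Sum>i\<in>{1..M}. S i \<omega>) - V)^2
      = (1/(real M)^2) * (\<Sum>i\<in>{1..M}. \<Sum>j\<in>{1..M}. S i \<omega> * S j \<omega>) - (2*V/real M) * (\<Sum>i\<in>{1..M}. S i \<omega>) + V^2"
    proof -
      have sp: "(\<Sum>i\<in>{1..M}. S i \<omega>) * (\<Sum>i\<in>{1..M}. S i \<omega>) = (\<Sum>i\<in>{1..M}. \<Sum>j\<in>{1..M}. S i \<omega> * S j \<omega>)"
        by (rule sum_product)
      show ?thesis unfolding sp[symmetric] using Mp by (simp add: power2_eq_square field_simps)
    qed
    ultimately show "((1 / real M) * (\<Sum>i=1..M. \<Sum>k<N. h * (xs i (real k * h) \<omega>)^2) - V)^2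
      = (1/(real M)^2) * (\<Sum>i\<in>{1..M}. \<Sum>j\<in>{1..M}. S i \<omega> * S j \<omega>) - (2*V/real M) * (\<Sum>i\<in>{1..M}. S i \<omega>) + V^2"
      by simp
  qed
  have iSS: "integrable P (\<lambda>\<omega>. \<Sum>i\<in>{1..M}. \<Sum>j\<in>{1..M}. S i \<omega> * S j \<omega>)"
    by (intro Bochner_Integration.integrable_sum) (use pair in blast)
  have iS: "integrable P (\<lambda>\<omega>. \<Sum>i\<in>{1..M}. S i \<omega>)"
    by (intro Bochner_Integration.integrable_sum) (use Si in blast)
  have eSS: "expectation (\<lambda>\<omega>. \<Sum>i\<in>{1..M}. \<Sum>j\<in>{1..M}. S i \<omega> * S j \<omega>) = real M * (m2 + (real M - 1) * m1^2)"
  proof -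
    have "expectation (\<lambda>\<omega>. \<Sum>i\<in>{1..M}. \<Sum>j\<in>{1..M}. S i \<omega> * S j \<omega>)
        = (\<Sum>i\<in>{1..M}. \<Sum>j\<in>{1..M}. expectation (\<lambda>\<omega>. S i \<omega> * S j \<omega>))"
    proof -
      have "expectation (\<lambda>\<omega>. \<Sum>i\<in>{1..M}. \<Sum>j\<in>{1..M}. S i \<omega> * S j \<omega>)
        = (\<Sum>i\<in>{1..M}. expectation (\<lambda>\<omega>. \<Sum>j\<in>{1..M}. S i \<omega> * S j \<omega>))"
        by (rule Bochner_Integration.integral_sum, rule Bochner_Integration.integrable_sum) (use pair in blast)
      also have "\<dots> = (\<Sum>i\<in>{1..M}. \<Sum>j\<in>{1..M}. expectation (\<lambda>\<omega>. S i \<omega> * S j \<omega>))"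
        by (rule sum.cong[OF refl], rule Bochner_Integration.integral_sum) (use pair in blast)
      finally show ?thesis .
    qed
    also have "\<dots> = (\<Sum>i\<in>{1..M}. \<Sum>j\<in>{1..M}. (if i = j then m2 else m1^2))"
      using pair by (intro sum.cong refl) auto
    also have "\<dots> = (\<Sum>i\<in>{1..M}. m2 + (real M - 1) * m1^2)"
      by (intro sum.cong refl) (simp add: sum_ite_const)
    also have "\<dots> = real M * (m2 + (real M - 1) * m1^2)" by simp
    finally show ?thesis .
  qed
  have eS: "expectation (\<lambda>\<omega>. \<Sum>i\<in>{1..M}. S i \<omega>) = real M * m1"
    using Si by (simp add: Bochner_Integration.integral_sum)
  have e1: "expectation (\<lambda>\<omega>. ((1 / real M) * (\<Sum>i=1..M. \<Sum>k<N. h * (xs i (real k * h) \<omega>)^2) - V)^2)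
      = (m1 - V)^2 + (m2 - m1^2) / real M"
  proof -
    have "expectation (\<lambda>\<omega>. (1/(real M)^2) * (\<Sum>i\<in>{1..M}. \<Sum>j\<in>{1..M}. S i \<omega> * S j \<omega>) - (2*V/real M) * (\<Sum>i\<in>{1..M}. S i \<omega>) + V^2)
      = (1/(real M)^2) * (real M * (m2 + (real M - 1) * m1^2)) - (2*V/real M) * (real M * m1) + V^2"
      using iSS iS eSS eS by (simp add: prob_space)
    also have "\<dots> = (m1 - V)^2 + (m2 - m1^2) / real M"
      using Mp by (simp add: field_simps power2_eq_square)
    finally show ?thesis unfolding e0 .
  qed
  define \<rho> where "\<rho> = exp (a*h)"
  have r2: "\<rho>^2 = exp (2*a*h)" unfolding \<rho>_def exp_pow by (simp add: algebra_simps)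
  have m1c: "m1 = h*\<sigma>^2/(2*a)*((\<Sum>k<N. exp (2*a*h)^k) - real N)"
  proof -
    have "m1 = (\<Sum>k<N. h*\<sigma>^2/(2*a) * (exp (2*a*h)^k - 1))"
      unfolding m1_def Cf_diag[OF h] by (simp add: algebra_simps)
    also have "\<dots> = h*\<sigma>^2/(2*a)*((\<Sum>k<N. exp (2*a*h)^k) - real N)"
      by (rule sum_c)
    finally show ?thesis .
  qed
  have m2c: "m2 - m1^2 = 2*h^2*(\<sigma>^4/(4*a^2))*(\<Sum>k<N. \<Sum>l<N. gg \<rho> k l)"
  proof -
    have "m1^2 = (\<Sum>k<N. \<Sum>l<N. h^2 * (Cf a \<sigma> (real k*h) (real k*h) * Cf a \<sigma> (real l*h) (real l*h)))"
      unfolding m1_def by (simp add: power2_eq_square sum_product algebra_simps)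
    moreover have "m2 = (\<Sum>k<N. \<Sum>l<N. h^2 * (Cf a \<sigma> (real k*h) (real k*h) * Cf a \<sigma> (real l*h) (real l*h)))
        + (\<Sum>k<N. \<Sum>l<N. 2*h^2*(\<sigma>^4/(4*a^2))*gg \<rho> k l)"
      unfolding m2_def \<rho>_def Cf_sq_gg[OF h] by (simp add: sum.distrib[symmetric] algebra_simps)
    ultimately show ?thesis by (simp add: sum_distrib_left)
  qed
  have Vc: "V = \<sigma>^2/(2*a)*((exp (2*a*T)-1)/(2*a) - T)"
  proof -
    have "V = integral {0..T} (\<lambda>t. \<sigma>^2 * (exp (2*a*t) - 1) / (2*a))"
      unfolding V_def
    proof (rule integral_cong)
      fix t assume "t \<in> {0..T}"
      then have "t \<ge> 0" by simp
      then show "expectation (\<lambda>\<eta>. (x t \<eta>)^2) = \<sigma>^2 * (exp (2*a*t) - 1) / (2*a)"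
        using moment_single(2)[OF assms(9,10) a s] by (simp add: Cf_def algebra_simps)
    qed
    then show ?thesis using V_integral[OF a Tp] by simp
  qed
  have G: "(exp (2*a*h) - 1) * (\<Sum>k<N. exp (2*a*h)^k) = exp (2*a*T) - 1"
  proof -
    have "exp (2*a*h)^N = exp (2*a*T)" unfolding TN exp_pow by (simp add: algebra_simps)
    then show ?thesis using geo[of "exp (2*a*h)" N] by simp
  qed
  have R: "exp (2*a*T) = (\<rho>^2)^N" unfolding r2 TN exp_pow by (simp add: algebra_simps)
  have F: "(exp (2*a*h) - 1)^2 * (\<Sum>k<N. \<Sum>l<N. gg \<rho> k l)
      = (exp (2*a*T) - 1)*(4*exp (2*a*h) + exp (2*a*T) + 1) - (exp (2*a*h)-1)*(exp (2*a*h) + 4*exp (2*a*T) + 1)*real N"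
    unfolding R r2[symmetric] by (rule F_closed)
  have "expectation (\<lambda>\<omega>. ((1 / real M) * (\<Sum>i=1..M. \<Sum>k<N. h * (xs i (real k * h) \<omega>)^2) - V)^2)
      = E1 \<sigma> h T a + E2 \<sigma> h T a / (real M * real N)"
    unfolding e1 m2c unfolding m1c Vc
    by (rule final_alg[OF a h Np _ TN refl refl G F]) (use assms(7) in simp)
  then show ?thesis unfolding V_def assms(8) by simp
qed

end
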